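(* Every pre-Hilbert $*$-category $\mathcal{C}$ is uniquely a $\mathbb{Q}$-linear category, that is, there is a unique way to equip each hom-set of $\mathcal{C}$ with the structure of a $\mathbb{Q}$-vector space (extending its abelian group structure) such that composition is bilinear. Additionally, $(fq)^* = f^* q$ for all morphisms $f$ and all $q\in\mathbb{Q}$.
   Context: A $*$-category is a category with a choice of $f^*\colon Y\to X$ for each $f\colon X\to Y$ such that $1^*=1$, $(gf)^*=f^*g^*$, $(f^* )^*=f$. A pre-Hilbert $*$-category is a $*$-category with (R1) a zero object, (R2) orthonormal biproducts of all pairs of objects (biproducts $(X,s_1,r_1,s_2,r_2)$ with $r_k=s_k^*$), (R3) an isometric kernel (kernel $m$ with $m^*m=1$) for every morphism, and (R4) every diagonal $\Delta\colon X\to X\oplus X$ a kernel of some morphism. Such a category is additive, hence uniquely enriched in abelian groups via its biproducts. *)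

theory Defs
  imports Complex_Main
begin

record ('o, 'm) star_cat =
  Ob  :: "'o set"
  Ar  :: "'m set"
  Dom :: "'m \<Rightarrow> 'o"
  Cod :: "'m \<Rightarrow> 'o"
  cmp :: "'m \<Rightarrow> 'm \<Rightarrow> 'm"   (* cmp C g f = g \<circ> f *)
  idt :: "'o \<Rightarrow> 'm"
  star :: "'m \<Rightarrow> 'm"

definition hom :: "('o, 'm) star_cat \<Rightarrow> 'o \<Rightarrow> 'o \<Rightarrow> 'm set" where
  "hom C X Y = {f \<in> Ar C. Dom C f = X \<and> Cod C f = Y}"

definition category :: "('o, 'm) star_cat \<Rightarrow> bool" where
  "category C \<longleftrightarrow>
     (\<forall>f \<in> Ar C. Dom C f \<in> Ob C \<and> Cod C f \<in> Ob C) \<and>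
     (\<forall>X \<in> Ob C. idt C X \<in> hom C X X) \<and>
     (\<forall>f \<in> Ar C. \<forall>g \<in> Ar C. Cod C f = Dom C g \<longrightarrow>
         cmp C g f \<in> hom C (Dom C f) (Cod C g)) \<and>
     (\<forall>f \<in> Ar C. \<forall>g \<in> Ar C. \<forall>h \<in> Ar C. Cod C f = Dom C g \<longrightarrow> Cod C g = Dom C h \<longrightarrow>
         cmp C h (cmp C g f) = cmp C (cmp C h g) f) \<and>
     (\<forall>f \<in> Ar C. cmp C f (idt C (Dom C f)) = f \<and> cmp C (idt C (Cod C f)) f = f)"

definition star_category :: "('o, 'm) star_cat \<Rightarrow> bool" where
  "star_category C \<longleftrightarrow> category C \<and>
     (\<forall>f \<in> Ar C. star C f \<in> hom C (Cod C f) (Dom C f)) \<and>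
     (\<forall>X \<in> Ob C. star C (idt C X) = idt C X) \<and>
     (\<forall>f \<in> Ar C. \<forall>g \<in> Ar C. Cod C f = Dom C g \<longrightarrow>
         star C (cmp C g f) = cmp C (star C f) (star C g)) \<and>
     (\<forall>f \<in> Ar C. star C (star C f) = f)"

definition zero_object :: "('o, 'm) star_cat \<Rightarrow> 'o \<Rightarrow> bool" where
  "zero_object C Z \<longleftrightarrow> Z \<in> Ob C \<and>
     (\<forall>X \<in> Ob C. (\<exists>!f. f \<in> hom C X Z) \<and> (\<exists>!f. f \<in> hom C Z X))"

definition zero_mor :: "('o, 'm) star_cat \<Rightarrow> 'o \<Rightarrow> 'o \<Rightarrow> 'm \<Rightarrow> bool" where
  "zero_mor C X Y z \<longleftrightarrow> z \<in> hom C X Y \<and>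
     (\<exists>Z a b. zero_object C Z \<and> a \<in> hom C X Z \<and> b \<in> hom C Z Y \<and> z = cmp C b a)"

definition biproduct ::
  "('o, 'm) star_cat \<Rightarrow> 'o \<Rightarrow> 'o \<Rightarrow> 'o \<Rightarrow> 'm \<Rightarrow> 'm \<Rightarrow> 'm \<Rightarrow> 'm \<Rightarrow> bool" where
  "biproduct C A1 A2 X s1 r1 s2 r2 \<longleftrightarrow>
     X \<in> Ob C \<and>
     s1 \<in> hom C A1 X \<and> s2 \<in> hom C A2 X \<and> r1 \<in> hom C X A1 \<and> r2 \<in> hom C X A2 \<and>
     cmp C r1 s1 = idt C A1 \<and> cmp C r2 s2 = idt C A2 \<and>
     zero_mor C A2 A1 (cmp C r1 s2) \<and> zero_mor C A1 A2 (cmp C r2 s1) \<and>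
     (\<forall>W \<in> Ob C. \<forall>f1 \<in> hom C W A1. \<forall>f2 \<in> hom C W A2.
        \<exists>!h. h \<in> hom C W X \<and> cmp C r1 h = f1 \<and> cmp C r2 h = f2) \<and>
     (\<forall>W \<in> Ob C. \<forall>f1 \<in> hom C A1 W. \<forall>f2 \<in> hom C A2 W.
        \<exists>!h. h \<in> hom C X W \<and> cmp C h s1 = f1 \<and> cmp C h s2 = f2)"

definition orthonormal_biproduct ::
  "('o, 'm) star_cat \<Rightarrow> 'o \<Rightarrow> 'o \<Rightarrow> 'o \<Rightarrow> 'm \<Rightarrow> 'm \<Rightarrow> bool" where
  "orthonormal_biproduct C A1 A2 X s1 s2 \<longleftrightarrow>
     biproduct C A1 A2 X s1 (star C s1) s2 (star C s2)"

definition kernel :: "('o, 'm) star_cat \<Rightarrow> 'm \<Rightarrow> 'm \<Rightarrow> bool" where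
  "kernel C f m \<longleftrightarrow> f \<in> Ar C \<and> m \<in> Ar C \<and> Cod C m = Dom C f \<and>
     zero_mor C (Dom C m) (Cod C f) (cmp C f m) \<and>
     (\<forall>g \<in> Ar C. Cod C g = Dom C f \<longrightarrow> zero_mor C (Dom C g) (Cod C f) (cmp C f g) \<longrightarrow>
        (\<exists>!h. h \<in> hom C (Dom C g) (Dom C m) \<and> cmp C m h = g))"

definition isometry :: "('o, 'm) star_cat \<Rightarrow> 'm \<Rightarrow> bool" where
  "isometry C m \<longleftrightarrow> cmp C (star C m) m = idt C (Dom C m)"

definition pre_hilbert :: "('o, 'm) star_cat \<Rightarrow> bool" where
  "pre_hilbert C \<longleftrightarrow> star_category C \<and>
     (\<exists>Z. zero_object C Z) \<and>
     (\<forall>A1 \<in> Ob C. \<forall>A2 \<in> Ob C. \<exists>X s1 s2. orthonormal_biproduct C A1 A2 X s1 s2) \<and>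
     (\<forall>f \<in> Ar C. \<exists>m. kernel C f m \<and> isometry C m) \<and>
     (\<forall>X \<in> Ob C. \<forall>B s1 s2 d. orthonormal_biproduct C X X B s1 s2 \<longrightarrow>
        d \<in> hom C X B \<longrightarrow> cmp C (star C s1) d = idt C X \<longrightarrow> cmp C (star C s2) d = idt C X \<longrightarrow>
        (\<exists>f \<in> Ar C. kernel C f d))"

definition ab_group_on :: "'m set \<Rightarrow> ('m \<Rightarrow> 'm \<Rightarrow> 'm) \<Rightarrow> bool" where
  "ab_group_on H add \<longleftrightarrow>
     (\<forall>x \<in> H. \<forall>y \<in> H. add x y \<in> H) \<and>
     (\<forall>x \<in> H. \<forall>y \<in> H. \<forall>z \<in> H. add (add x y) z = add x (add y z)) \<and>
     (\<forall>x \<in> H. \<forall>y \<in> H. add x y = add y x) \<and>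
     (\<exists>e \<in> H. (\<forall>x \<in> H. add e x = x) \<and> (\<forall>x \<in> H. \<exists>y \<in> H. add x y = e))"

definition ab_enriched :: "('o, 'm) star_cat \<Rightarrow> ('m \<Rightarrow> 'm \<Rightarrow> 'm) \<Rightarrow> bool" where
  "ab_enriched C add \<longleftrightarrow>
     (\<forall>X \<in> Ob C. \<forall>Y \<in> Ob C. ab_group_on (hom C X Y) add) \<and>
     (\<forall>X \<in> Ob C. \<forall>Y \<in> Ob C. \<forall>Z \<in> Ob C.
        \<forall>f \<in> hom C X Y. \<forall>f' \<in> hom C X Y. \<forall>g \<in> hom C Y Z. \<forall>g' \<in> hom C Y Z.
          cmp C g (add f f') = add (cmp C g f) (cmp C g f') \<and>
          cmp C (add g g') f = add (cmp C g f) (cmp C g' f))"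

definition rat_vector_space_on ::
  "'m set \<Rightarrow> ('m \<Rightarrow> 'm \<Rightarrow> 'm) \<Rightarrow> (rat \<Rightarrow> 'm \<Rightarrow> 'm) \<Rightarrow> bool" where
  "rat_vector_space_on H add smul \<longleftrightarrow> ab_group_on H add \<and>
     (\<forall>q. \<forall>x \<in> H. smul q x \<in> H) \<and>
     (\<forall>x \<in> H. smul 1 x = x) \<and>
     (\<forall>a b. \<forall>x \<in> H. smul (a * b) x = smul a (smul b x)) \<and>
     (\<forall>a b. \<forall>x \<in> H. smul (a + b) x = add (smul a x) (smul b x)) \<and>
     (\<forall>a. \<forall>x \<in> H. \<forall>y \<in> H. smul a (add x y) = add (smul a x) (smul a y))"

definition rat_linear :: "('o, 'm) star_cat \<Rightarrow> ('m \<Rightarrow> 'm \<Rightarrow> 'm) \<Rightarrow> (rat \<Rightarrow> 'm \<Rightarrow> 'm) \<Rightarrow> bool" where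
  "rat_linear C add smul \<longleftrightarrow> ab_enriched C add \<and>
     (\<forall>X \<in> Ob C. \<forall>Y \<in> Ob C. rat_vector_space_on (hom C X Y) add smul) \<and>
     (\<forall>X \<in> Ob C. \<forall>Y \<in> Ob C. \<forall>Z \<in> Ob C. \<forall>f \<in> hom C X Y. \<forall>g \<in> hom C Y Z. \<forall>q.
        cmp C g (smul q f) = smul q (cmp C g f) \<and> cmp C (smul q g) f = smul q (cmp C g f))"

end

theory Submission imports Defs "HOL-Algebra.Group" begin

abbreviation Hm :: "('o,'m) star_cat \<Rightarrow> 'o \<Rightarrow> 'o \<Rightarrow> 'm set" where "Hm \<equiv> Defs.hom"

definition prB :: "('o,'m) star_cat \<Rightarrow> 'o \<Rightarrow> 'm \<Rightarrow> 'm \<Rightarrow> 'm \<Rightarrow> 'm \<Rightarrow> 'm" where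
  "prB C B s1 s2 f1 f2 = (SOME h. h \<in> Hm C (Dom C f1) B \<and> cmp C (star C s1) h = f1 \<and> cmp C (star C s2) h = f2)"
definition cprB :: "('o,'m) star_cat \<Rightarrow> 'o \<Rightarrow> 'm \<Rightarrow> 'm \<Rightarrow> 'm \<Rightarrow> 'm \<Rightarrow> 'm" where
  "cprB C B s1 s2 f1 f2 = (SOME h. h \<in> Hm C B (Cod C f1) \<and> cmp C h s1 = f1 \<and> cmp C h s2 = f2)"

locale pc =
  fixes C :: "('o,'m) star_cat"
  assumes ph: "pre_hilbert C"
begin

abbreviation cp (infixr "\<cdot>" 70) where "g \<cdot> f \<equiv> cmp C g f"
abbreviation st where "st f \<equiv> star C f"
abbreviation dm where "dm f \<equiv> Dom C f"
abbreviation cd where "cd f \<equiv> Cod C f"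
abbreviation ID where "ID X \<equiv> idt C X"

lemma sc: "star_category C" using ph pre_hilbert_def by auto
lemma cat: "category C" using sc star_category_def by auto

lemma hom_iff[simp]: "f \<in> Hm C X Y \<longleftrightarrow> f \<in> Ar C \<and> dm f = X \<and> cd f = Y"
  by (simp add: Defs.hom_def)

lemma dc_ob[simp]: "f \<in> Ar C \<Longrightarrow> dm f \<in> Ob C" "f \<in> Ar C \<Longrightarrow> cd f \<in> Ob C"
  using cat unfolding category_def by auto

lemma comp_ar[simp]:
  assumes "f \<in> Ar C" "g \<in> Ar C" "dm g = cd f"
  shows "g \<cdot> f \<in> Ar C" "dm (g \<cdot> f) = dm f" "cd (g \<cdot> f) = cd g"
  using cat assms unfolding category_def by auto

lemma comp_assoc:
  assumes "f \<in> Ar C" "g \<in> Ar C" "h \<in> Ar C" "dm g = cd f" "dm h = cd g"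
  shows "(h \<cdot> g) \<cdot> f = h \<cdot> (g \<cdot> f)"
  using cat assms unfolding category_def by metis

lemma id_ar[simp]: assumes "X \<in> Ob C" shows "ID X \<in> Ar C" "dm (ID X) = X" "cd (ID X) = X"
  using cat assms unfolding category_def by auto

lemma idl[simp]: "f \<in> Ar C \<Longrightarrow> cd f = Y \<Longrightarrow> ID Y \<cdot> f = f"
  using cat unfolding category_def by auto
lemma idr[simp]: "f \<in> Ar C \<Longrightarrow> dm f = X \<Longrightarrow> f \<cdot> ID X = f"
  using cat unfolding category_def by auto

lemma st_ar[simp]: assumes "f \<in> Ar C" shows "st f \<in> Ar C" "dm (st f) = cd f" "cd (st f) = dm f"
  using sc assms unfolding star_category_def by auto
lemma st_st[simp]: "f \<in> Ar C \<Longrightarrow> st (st f) = f"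
  using sc unfolding star_category_def by auto
lemma st_comp[simp]: "f \<in> Ar C \<Longrightarrow> g \<in> Ar C \<Longrightarrow> dm g = cd f \<Longrightarrow> st (g \<cdot> f) = st f \<cdot> st g"
  using sc unfolding star_category_def by auto
lemma st_id[simp]: "X \<in> Ob C \<Longrightarrow> st (ID X) = ID X"
  using sc unfolding star_category_def by auto

lemma st_inj: "f \<in> Ar C \<Longrightarrow> g \<in> Ar C \<Longrightarrow> st f = st g \<Longrightarrow> f = g"
  by (metis st_st)

subsection \<open>Zero morphisms\<close>

lemma zo_ex: "\<exists>Z. zero_object C Z" using ph pre_hilbert_def by auto

lemma zero_mor_ex: assumes "X \<in> Ob C" "Y \<in> Ob C" shows "\<exists>z. zero_mor C X Y z"
proof -
  obtain Z where Z: "zero_object C Z" using zo_ex by auto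
  then have ZO: "Z \<in> Ob C" unfolding zero_object_def by auto
  obtain a where a: "a \<in> Hm C X Z" using Z assms unfolding zero_object_def by auto
  obtain b where b: "b \<in> Hm C Z Y" using Z assms unfolding zero_object_def by auto
  have "zero_mor C X Y (b \<cdot> a)" unfolding zero_mor_def using a b Z by auto
  then show ?thesis by blast
qed

lemma zero_mor_uniq: assumes "zero_mor C X Y z" "zero_mor C X Y z'" shows "z = z'"
proof -
  obtain Z a b where Z: "zero_object C Z" and a: "a \<in> Hm C X Z" and b: "b \<in> Hm C Z Y" and z: "z = b \<cdot> a"
    using assms(1) unfolding zero_mor_def by blast
  obtain Z' a' b' where Z': "zero_object C Z'" and a': "a' \<in> Hm C X Z'" and b': "b' \<in> Hm C Z' Y" and z': "z' = b' \<cdot> a'"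
    using assms(2) unfolding zero_mor_def by blast
  have ZO: "Z \<in> Ob C" "Z' \<in> Ob C" using Z Z' unfolding zero_object_def by auto
  obtain u where u: "u \<in> Hm C Z Z'" using Z' ZO unfolding zero_object_def by blast
  have XO: "X \<in> Ob C" "Y \<in> Ob C" using a b by auto
  have "\<exists>!f. f \<in> Hm C X Z'" using Z' XO unfolding zero_object_def by blast
  moreover have "u \<cdot> a \<in> Hm C X Z'" using u a by auto
  ultimately have 1: "a' = u \<cdot> a" using a' by blast
  have "\<exists>!f. f \<in> Hm C Z Y" using Z XO unfolding zero_object_def by blast
  moreover have "b' \<cdot> u \<in> Hm C Z Y" using u b' by auto
  ultimately have 2: "b = b' \<cdot> u" using b by blast
  show ?thesis using 1 2 z z' a b u b' comp_assoc[of a u b'] by auto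
qed

definition zr where "zr X Y = (SOME z. zero_mor C X Y z)"

lemma zr_prop: "X \<in> Ob C \<Longrightarrow> Y \<in> Ob C \<Longrightarrow> zero_mor C X Y (zr X Y)"
  unfolding zr_def by (rule someI_ex, rule zero_mor_ex) assumption+

lemma zero_mor_D: "zero_mor C X Y z \<Longrightarrow> z \<in> Ar C \<and> dm z = X \<and> cd z = Y \<and> X \<in> Ob C \<and> Y \<in> Ob C"
  unfolding zero_mor_def hom_iff by (metis dc_ob)

lemma zr_eq: "zero_mor C X Y z \<Longrightarrow> z = zr X Y"
proof -
  assume z: "zero_mor C X Y z"
  then have "X \<in> Ob C" "Y \<in> Ob C" using zero_mor_D by blast+
  then have "zero_mor C X Y (zr X Y)" by (rule zr_prop)
  then show ?thesis by (rule zero_mor_uniq[OF z])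
qed

lemma zr_ar[simp]: assumes "X \<in> Ob C" "Y \<in> Ob C" shows "zr X Y \<in> Ar C" "dm (zr X Y) = X" "cd (zr X Y) = Y"
  using zr_prop[OF assms] zero_mor_D by blast+

lemma comp_zr[simp]: assumes g: "g \<in> Ar C" "dm g = Y" and X: "X \<in> Ob C" shows "g \<cdot> zr X Y = zr X (cd g)"
proof -
  have Y: "Y \<in> Ob C" using g dc_ob by metis
  obtain Z a b where Z: "zero_object C Z" and a: "a \<in> Hm C X Z" and b: "b \<in> Hm C Z Y" and z: "zr X Y = b \<cdot> a"
    using zr_prop[OF X Y] unfolding zero_mor_def by blast
  have a': "a \<in> Ar C" "dm a = X" "cd a = Z" using a by simp_all
  have b': "b \<in> Ar C" "dm b = Z" "cd b = Y" using b by simp_all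
  have e: "g \<cdot> zr X Y = (g \<cdot> b) \<cdot> a" using z a' b' g comp_assoc[of a b g] by simp
  have gb: "g \<cdot> b \<in> Hm C Z (cd g)" using g b' by simp
  have "(g \<cdot> b) \<cdot> a \<in> Hm C X (cd g)" using g b' a' by simp
  then have "zero_mor C X (cd g) ((g \<cdot> b) \<cdot> a)" unfolding zero_mor_def
    using Z a gb by blast
  then show ?thesis using e zr_eq by metis
qed

lemma zr_comp[simp]: assumes f: "f \<in> Ar C" "cd f = Y" and Z0: "Z \<in> Ob C" shows "zr Y Z \<cdot> f = zr (dm f) Z"
proof -
  have Y: "Y \<in> Ob C" using f dc_ob by metis
  obtain Z' a b where Z: "zero_object C Z'" and a: "a \<in> Hm C Y Z'" and b: "b \<in> Hm C Z' Z" and z: "zr Y Z = b \<cdot> a"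
    using zr_prop[OF Y Z0] unfolding zero_mor_def by blast
  have a': "a \<in> Ar C" "dm a = Y" "cd a = Z'" using a by simp_all
  have b': "b \<in> Ar C" "dm b = Z'" "cd b = Z" using b by simp_all
  have e: "zr Y Z \<cdot> f = b \<cdot> (a \<cdot> f)" using z a' b' f comp_assoc[of f a b] by simp
  have af: "a \<cdot> f \<in> Hm C (dm f) Z'" using f a' by simp
  have "b \<cdot> (a \<cdot> f) \<in> Hm C (dm f) Z" using f b' a' by simp
  then have "zero_mor C (dm f) Z (b \<cdot> (a \<cdot> f))" unfolding zero_mor_def
    using Z af b by blast
  then show ?thesis using e zr_eq by metis
qed

lemma st_zr[simp]: assumes X: "X \<in> Ob C" and Y: "Y \<in> Ob C" shows "st (zr X Y) = zr Y X"
proof -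
  obtain Z a b where Z: "zero_object C Z" and a: "a \<in> Hm C X Z" and b: "b \<in> Hm C Z Y" and z: "zr X Y = b \<cdot> a"
    using zr_prop[OF X Y] unfolding zero_mor_def by blast
  have a': "a \<in> Ar C" "dm a = X" "cd a = Z" using a by simp_all
  have b': "b \<in> Ar C" "dm b = Z" "cd b = Y" using b by simp_all
  have e: "st (zr X Y) = st a \<cdot> st b" using z a' b' by simp
  have sa: "st a \<in> Hm C Z X" "st b \<in> Hm C Y Z" using a' b' by simp_all
  have "st a \<cdot> st b \<in> Hm C Y X" using a' b' by simp
  then have "zero_mor C Y X (st a \<cdot> st b)" unfolding zero_mor_def
    using Z sa by blast
  then show ?thesis using e zr_eq by metis
qed

lemma bp_ex: "A1 \<in> Ob C \<Longrightarrow> A2 \<in> Ob C \<Longrightarrow> \<exists>B s1 s2. orthonormal_biproduct C A1 A2 B s1 s2"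
  using ph unfolding pre_hilbert_def by blast

lemma ker_ex: "f \<in> Ar C \<Longrightarrow> \<exists>m. kernel C f m \<and> isometry C m"
  using ph unfolding pre_hilbert_def by blast

end

locale obp = pc +
  fixes A1 A2 B s1 s2
  assumes ob: "orthonormal_biproduct C A1 A2 B s1 s2"
begin

lemma bpd: "biproduct C A1 A2 B s1 (st s1) s2 (st s2)" using ob unfolding orthonormal_biproduct_def .

lemma ob_facts0: "B \<in> Ob C \<and> s1 \<in> Hm C A1 B \<and> s2 \<in> Hm C A2 B"
  using bpd unfolding biproduct_def by blast

lemma ob_facts[simp]: "B \<in> Ob C" "s1 \<in> Ar C" "dm s1 = A1" "cd s1 = B"
   "s2 \<in> Ar C" "dm s2 = A2" "cd s2 = B"
  using ob_facts0 by simp_all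

lemma ob_facts2[simp]: "A1 \<in> Ob C" "A2 \<in> Ob C"
  using ob_facts dc_ob by metis+

lemma pij[simp]: "st s1 \<cdot> s1 = ID A1" "st s2 \<cdot> s2 = ID A2" "st s1 \<cdot> s2 = zr A2 A1" "st s2 \<cdot> s1 = zr A1 A2"
proof -
  have "cmp C (st s1) s1 = ID A1 \<and> cmp C (st s2) s2 = ID A2 \<and>
     zero_mor C A2 A1 (cmp C (st s1) s2) \<and> zero_mor C A1 A2 (cmp C (st s2) s1)"
    using bpd unfolding biproduct_def by blast
  then show "st s1 \<cdot> s1 = ID A1" "st s2 \<cdot> s2 = ID A2" "st s1 \<cdot> s2 = zr A2 A1" "st s2 \<cdot> s1 = zr A1 A2"
    using zr_eq by blast+
qed

lemma pij2: assumes f: "f \<in> Ar C"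
  shows "cd f = A1 \<Longrightarrow> st s1 \<cdot> (s1 \<cdot> f) = f" "cd f = A2 \<Longrightarrow> st s2 \<cdot> (s2 \<cdot> f) = f"
    "cd f = A2 \<Longrightarrow> st s1 \<cdot> (s2 \<cdot> f) = zr (dm f) A1" "cd f = A1 \<Longrightarrow> st s2 \<cdot> (s1 \<cdot> f) = zr (dm f) A2"
proof -
  assume c: "cd f = A1"
  have "st s1 \<cdot> (s1 \<cdot> f) = (st s1 \<cdot> s1) \<cdot> f" by (rule comp_assoc[symmetric]) (use f c in simp_all)
  then show "st s1 \<cdot> (s1 \<cdot> f) = f" using f c by simp
next
  assume c: "cd f = A2"
  have "st s2 \<cdot> (s2 \<cdot> f) = (st s2 \<cdot> s2) \<cdot> f" by (rule comp_assoc[symmetric]) (use f c in simp_all)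
  then show "st s2 \<cdot> (s2 \<cdot> f) = f" using f c by simp
next
  assume c: "cd f = A2"
  have "st s1 \<cdot> (s2 \<cdot> f) = (st s1 \<cdot> s2) \<cdot> f" by (rule comp_assoc[symmetric]) (use f c in simp_all)
  then show "st s1 \<cdot> (s2 \<cdot> f) = zr (dm f) A1" using f c by simp
next
  assume c: "cd f = A1"
  have "st s2 \<cdot> (s1 \<cdot> f) = (st s2 \<cdot> s1) \<cdot> f" by (rule comp_assoc[symmetric]) (use f c in simp_all)
  then show "st s2 \<cdot> (s1 \<cdot> f) = zr (dm f) A2" using f c by simp
qed

lemma pair_ex1: "W \<in> Ob C \<Longrightarrow> f1 \<in> Hm C W A1 \<Longrightarrow> f2 \<in> Hm C W A2 \<Longrightarrow>
        \<exists>!h. h \<in> Hm C W B \<and> st s1 \<cdot> h = f1 \<and> st s2 \<cdot> h = f2"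
  using bpd unfolding biproduct_def by blast

lemma copair_ex1: "W \<in> Ob C \<Longrightarrow> f1 \<in> Hm C A1 W \<Longrightarrow> f2 \<in> Hm C A2 W \<Longrightarrow>
        \<exists>!h. h \<in> Hm C B W \<and> h \<cdot> s1 = f1 \<and> h \<cdot> s2 = f2"
  using bpd unfolding biproduct_def by blast

lemma jmono: assumes "x \<in> Ar C" "y \<in> Ar C" "cd x = B" "cd y = B" "dm y = dm x"
  "st s1 \<cdot> x = st s1 \<cdot> y" "st s2 \<cdot> x = st s2 \<cdot> y" shows "x = y"
proof -
  have h1: "st s1 \<cdot> x \<in> Hm C (dm x) A1" "st s2 \<cdot> x \<in> Hm C (dm x) A2" using assms by simp_all
  have "\<exists>!h. h \<in> Hm C (dm x) B \<and> st s1 \<cdot> h = st s1 \<cdot> x \<and> st s2 \<cdot> h = st s2 \<cdot> x"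
    using assms(1) h1 by (intro pair_ex1) simp_all
  moreover have "x \<in> Hm C (dm x) B" "y \<in> Hm C (dm x) B" using assms by simp_all
  ultimately show ?thesis using assms(6,7) by metis
qed

lemma jepi: assumes "x \<in> Ar C" "y \<in> Ar C" "dm x = B" "dm y = B" "cd y = cd x"
  "x \<cdot> s1 = y \<cdot> s1" "x \<cdot> s2 = y \<cdot> s2" shows "x = y"
proof -
  have h1: "x \<cdot> s1 \<in> Hm C A1 (cd x)" "x \<cdot> s2 \<in> Hm C A2 (cd x)" using assms by simp_all
  have "\<exists>!h. h \<in> Hm C B (cd x) \<and> h \<cdot> s1 = x \<cdot> s1 \<and> h \<cdot> s2 = x \<cdot> s2"
    using assms(1) h1 by (intro copair_ex1) simp_all
  moreover have "x \<in> Hm C B (cd x)" "y \<in> Hm C B (cd x)" using assms by simp_all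
  ultimately show ?thesis using assms(6,7) by metis
qed

abbreviation pr where "pr \<equiv> prB C B s1 s2"
abbreviation cpr where "cpr \<equiv> cprB C B s1 s2"

lemma pr: assumes "f1 \<in> Ar C" "f2 \<in> Ar C" "cd f1 = A1" "cd f2 = A2" "dm f2 = dm f1"
  shows "pr f1 f2 \<in> Ar C" "dm (pr f1 f2) = dm f1" "cd (pr f1 f2) = B" "st s1 \<cdot> pr f1 f2 = f1" "st s2 \<cdot> pr f1 f2 = f2"
proof -
  have "\<exists>h. h \<in> Hm C (dm f1) B \<and> st s1 \<cdot> h = f1 \<and> st s2 \<cdot> h = f2"
    using pair_ex1[of "dm f1" f1 f2] assms by (simp add: Ex1_def) blast
  from someI_ex[OF this] have "pr f1 f2 \<in> Hm C (dm f1) B \<and> st s1 \<cdot> pr f1 f2 = f1 \<and> st s2 \<cdot> pr f1 f2 = f2"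
    unfolding prB_def .
  then show "pr f1 f2 \<in> Ar C" "dm (pr f1 f2) = dm f1" "cd (pr f1 f2) = B" "st s1 \<cdot> pr f1 f2 = f1" "st s2 \<cdot> pr f1 f2 = f2"
    by simp_all
qed

lemma cpr: assumes "f1 \<in> Ar C" "f2 \<in> Ar C" "dm f1 = A1" "dm f2 = A2" "cd f2 = cd f1"
  shows "cpr f1 f2 \<in> Ar C" "dm (cpr f1 f2) = B" "cd (cpr f1 f2) = cd f1" "cpr f1 f2 \<cdot> s1 = f1" "cpr f1 f2 \<cdot> s2 = f2"
proof -
  have "\<exists>h. h \<in> Hm C B (cd f1) \<and> h \<cdot> s1 = f1 \<and> h \<cdot> s2 = f2"
    using copair_ex1[of "cd f1" f1 f2] assms by (simp add: Ex1_def) blast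
  from someI_ex[OF this] have "cpr f1 f2 \<in> Hm C B (cd f1) \<and> cpr f1 f2 \<cdot> s1 = f1 \<and> cpr f1 f2 \<cdot> s2 = f2"
    unfolding cprB_def .
  then show "cpr f1 f2 \<in> Ar C" "dm (cpr f1 f2) = B" "cd (cpr f1 f2) = cd f1" "cpr f1 f2 \<cdot> s1 = f1" "cpr f1 f2 \<cdot> s2 = f2"
    by simp_all
qed

lemma pr_uniq: assumes "h \<in> Ar C" "cd h = B" "f1 = st s1 \<cdot> h" "f2 = st s2 \<cdot> h"
  shows "h = pr f1 f2"
proof -
  have f: "f1 \<in> Ar C" "f2 \<in> Ar C" "cd f1 = A1" "cd f2 = A2" "dm f2 = dm f1" "dm f1 = dm h"
    using assms by simp_all
  note p = pr[OF f(1-5)]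
  show ?thesis by (rule jmono) (use assms f p in simp_all)
qed

lemma cpr_uniq: assumes "h \<in> Ar C" "dm h = B" "f1 = h \<cdot> s1" "f2 = h \<cdot> s2"
  shows "h = cpr f1 f2"
proof -
  have f: "f1 \<in> Ar C" "f2 \<in> Ar C" "dm f1 = A1" "dm f2 = A2" "cd f2 = cd f1" "cd f1 = cd h"
    using assms by simp_all
  note p = cpr[OF f(1-5)]
  show ?thesis by (rule jepi) (use assms f p in simp_all)
qed

end


context pc begin

definition bt where "bt X = (SOME t. orthonormal_biproduct C X X (fst t) (fst (snd t)) (snd (snd t)))"
definition B2 where "B2 X = fst (bt X)"
definition j1 where "j1 X = fst (snd (bt X))"
definition j2 where "j2 X = snd (snd (bt X))"

lemma obX: assumes "X \<in> Ob C" shows "obp C X X (B2 X) (j1 X) (j2 X)"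
proof -
  obtain B s1 s2 where "orthonormal_biproduct C X X B s1 s2" using bp_ex assms by blast
  then have "\<exists>t. orthonormal_biproduct C X X (fst t) (fst (snd t)) (snd (snd t))" by (intro exI[of _ "(B,s1,s2)"]) simp
  from someI_ex[OF this] have "orthonormal_biproduct C X X (B2 X) (j1 X) (j2 X)"
    unfolding B2_def j1_def j2_def bt_def .
  then show ?thesis by (simp add: obp_def obp_axioms_def pc_axioms)
qed

definition dgl where "dgl X = prB C (B2 X) (j1 X) (j2 X) (ID X) (ID X)"
definition cdg where "cdg X = cprB C (B2 X) (j1 X) (j2 X) (ID X) (ID X)"
definition op1 where "op1 f g = cprB C (B2 (dm f)) (j1 (dm f)) (j2 (dm f)) f g \<cdot> dgl (dm f)"
definition op2 where "op2 f g = cdg (cd f) \<cdot> prB C (B2 (cd f)) (j1 (cd f)) (j2 (cd f)) f g"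

lemma dgl: assumes "X \<in> Ob C" shows "dgl X \<in> Ar C" "dm (dgl X) = X" "cd (dgl X) = B2 X"
  "st (j1 X) \<cdot> dgl X = ID X" "st (j2 X) \<cdot> dgl X = ID X"
proof -
  interpret b: obp C X X "B2 X" "j1 X" "j2 X" using obX[OF assms] .
  show "dgl X \<in> Ar C" "dm (dgl X) = X" "cd (dgl X) = B2 X"
  "st (j1 X) \<cdot> dgl X = ID X" "st (j2 X) \<cdot> dgl X = ID X" unfolding dgl_def using b.pr[of "ID X" "ID X"] assms by simp_all
qed

lemma cdg: assumes "X \<in> Ob C" shows "cdg X \<in> Ar C" "dm (cdg X) = B2 X" "cd (cdg X) = X"
  "cdg X \<cdot> j1 X = ID X" "cdg X \<cdot> j2 X = ID X"
proof -
  interpret b: obp C X X "B2 X" "j1 X" "j2 X" using obX[OF assms] .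
  show "cdg X \<in> Ar C" "dm (cdg X) = B2 X" "cd (cdg X) = X"
  "cdg X \<cdot> j1 X = ID X" "cdg X \<cdot> j2 X = ID X" unfolding cdg_def using b.cpr[of "ID X" "ID X"] assms by simp_all
qed

abbreviation par where "par f g \<equiv> f \<in> Ar C \<and> g \<in> Ar C \<and> dm g = dm f \<and> cd g = cd f"

lemma op1_ar: assumes "par f g" shows "op1 f g \<in> Ar C" "dm (op1 f g) = dm f" "cd (op1 f g) = cd f"
proof -
  interpret b: obp C "dm f" "dm f" "B2 (dm f)" "j1 (dm f)" "j2 (dm f)" using obX assms by simp
  note c = b.cpr[of f g] note d = dgl[of "dm f"]
  show "op1 f g \<in> Ar C" "dm (op1 f g) = dm f" "cd (op1 f g) = cd f" unfolding op1_def using assms c d by simp_all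
qed

lemma op2_ar: assumes "par f g" shows "op2 f g \<in> Ar C" "dm (op2 f g) = dm f" "cd (op2 f g) = cd f"
proof -
  interpret b: obp C "cd f" "cd f" "B2 (cd f)" "j1 (cd f)" "j2 (cd f)" using obX assms by simp
  note c = b.pr[of f g] note d = cdg[of "cd f"]
  show "op2 f g \<in> Ar C" "dm (op2 f g) = dm f" "cd (op2 f g) = cd f" unfolding op2_def using assms c d by simp_all
qed

lemma op1_zr: assumes f: "f \<in> Ar C" shows "op1 f (zr (dm f) (cd f)) = f" "op1 (zr (dm f) (cd f)) f = f"
proof -
  let ?X = "dm f" and ?Y = "cd f"
  interpret b: obp C ?X ?X "B2 ?X" "j1 ?X" "j2 ?X" using obX f by simp
  note d = dgl[of ?X]
  have XY: "?X \<in> Ob C" "?Y \<in> Ob C" using f by simp_all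
  have "f \<cdot> st (j1 ?X) = b.cpr f (zr ?X ?Y)"
    using f XY comp_assoc[of "j1 ?X" "st (j1 ?X)" f] comp_assoc[of "j2 ?X" "st (j1 ?X)" f] by (intro b.cpr_uniq) simp_all
  then show "op1 f (zr ?X ?Y) = f" unfolding op1_def using f XY d comp_assoc[of "dgl ?X" "st (j1 ?X)" f] by simp
  have "f \<cdot> st (j2 ?X) = b.cpr (zr ?X ?Y) f"
    using f XY comp_assoc[of "j1 ?X" "st (j2 ?X)" f] comp_assoc[of "j2 ?X" "st (j2 ?X)" f] by (intro b.cpr_uniq) simp_all
  then show "op1 (zr ?X ?Y) f = f" unfolding op1_def using f XY d comp_assoc[of "dgl ?X" "st (j2 ?X)" f] by simp
qed

lemma op2_zr: assumes f: "f \<in> Ar C" shows "op2 f (zr (dm f) (cd f)) = f" "op2 (zr (dm f) (cd f)) f = f"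
proof -
  let ?X = "dm f" and ?Y = "cd f"
  interpret b: obp C ?Y ?Y "B2 ?Y" "j1 ?Y" "j2 ?Y" using obX f by simp
  note d = cdg[of ?Y]
  have XY: "?X \<in> Ob C" "?Y \<in> Ob C" using f by simp_all
  have "j1 ?Y \<cdot> f = b.pr f (zr ?X ?Y)"
    using f XY comp_assoc[of f "j1 ?Y" "st (j1 ?Y)"] comp_assoc[of f "j1 ?Y" "st (j2 ?Y)"] by (intro b.pr_uniq) simp_all
  then show "op2 f (zr ?X ?Y) = f" unfolding op2_def using f XY d comp_assoc[of f "j1 ?Y" "cdg ?Y"] by simp
  have "j2 ?Y \<cdot> f = b.pr (zr ?X ?Y) f"
    using f XY comp_assoc[of f "j2 ?Y" "st (j1 ?Y)"] comp_assoc[of f "j2 ?Y" "st (j2 ?Y)"] by (intro b.pr_uniq) simp_all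
  then show "op2 (zr ?X ?Y) f = f" unfolding op2_def using f XY d comp_assoc[of f "j2 ?Y" "cdg ?Y"] by simp
qed


lemma op_eq: assumes "par f g" shows "op1 f g = op2 f g"
proof -
  let ?X = "dm f" and ?Y = "cd f"
  interpret a: obp C ?X ?X "B2 ?X" "j1 ?X" "j2 ?X" using obX assms by simp
  interpret b: obp C ?Y ?Y "B2 ?Y" "j1 ?Y" "j2 ?Y" using obX assms by simp
  have XY: "?X \<in> Ob C" "?Y \<in> Ob C" using assms by simp_all
  have f: "f \<in> Ar C" "g \<in> Ar C" "dm g = ?X" "cd g = ?Y" using assms by simp_all
  define M where "M = b.pr (f \<cdot> st (j1 ?X)) (g \<cdot> st (j2 ?X))"
  note Mp = b.pr[of "f \<cdot> st (j1 ?X)" "g \<cdot> st (j2 ?X)", folded M_def]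
  have M: "M \<in> Ar C" "dm M = B2 ?X" "cd M = B2 ?Y" "st (j1 ?Y) \<cdot> M = f \<cdot> st (j1 ?X)" "st (j2 ?Y) \<cdot> M = g \<cdot> st (j2 ?X)"
    using Mp f by simp_all
  note d = dgl[OF XY(1)] cdg[OF XY(2)]
  have M1: "M \<cdot> j1 ?X = b.pr f (zr ?X ?Y)"
    apply (rule b.pr_uniq) using M f XY comp_assoc[of "j1 ?X" M "st (j1 ?Y)"] comp_assoc[of "j1 ?X" M "st (j2 ?Y)"]
      comp_assoc[of "j1 ?X" "st (j1 ?X)" f] comp_assoc[of "j1 ?X" "st (j2 ?X)" g] by simp_all
  have M2: "M \<cdot> j2 ?X = b.pr (zr ?X ?Y) g"
    apply (rule b.pr_uniq) using M f XY comp_assoc[of "j2 ?X" M "st (j1 ?Y)"] comp_assoc[of "j2 ?X" M "st (j2 ?Y)"]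
      comp_assoc[of "j2 ?X" "st (j1 ?X)" f] comp_assoc[of "j2 ?X" "st (j2 ?X)" g] by simp_all
  have o1: "op2 f (zr ?X ?Y) = f" "op2 (zr ?X ?Y) g = g" using op2_zr[of f] op2_zr[of g] f by simp_all
  have cM: "cdg ?Y \<cdot> M = a.cpr f g"
    apply (rule a.cpr_uniq) using M f XY d M1 M2 o1 comp_assoc[of "j1 ?X" M "cdg ?Y"] comp_assoc[of "j2 ?X" M "cdg ?Y"]
    unfolding op2_def by simp_all
  have Md: "M \<cdot> dgl ?X = b.pr f g"
    apply (rule b.pr_uniq) using M f XY d comp_assoc[of "dgl ?X" M "st (j1 ?Y)"] comp_assoc[of "dgl ?X" M "st (j2 ?Y)"]
      comp_assoc[of "dgl ?X" "st (j1 ?X)" f] comp_assoc[of "dgl ?X" "st (j2 ?X)" g] by simp_all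
  show ?thesis unfolding op1_def op2_def using cM[symmetric] Md M d comp_assoc[of "dgl ?X" M "cdg ?Y"] f by simp
qed

lemma op_inter: assumes "par a b" "par a c" "par a d"
  shows "op1 (op2 a b) (op2 c d) = op2 (op1 a c) (op1 b d)"
proof -
  let ?X = "dm a" and ?Y = "cd a"
  interpret x: obp C ?X ?X "B2 ?X" "j1 ?X" "j2 ?X" using obX assms by simp
  interpret y: obp C ?Y ?Y "B2 ?Y" "j1 ?Y" "j2 ?Y" using obX assms by simp
  have XY: "?X \<in> Ob C" "?Y \<in> Ob C" using assms by simp_all
  have f: "a \<in> Ar C" "b \<in> Ar C" "c \<in> Ar C" "d \<in> Ar C" "dm b = ?X" "cd b = ?Y" "dm c = ?X" "cd c = ?Y"
     "dm d = ?X" "cd d = ?Y" using assms by simp_all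
  note ac = x.cpr[of a c] note bd = x.cpr[of b d]
  define M where "M = y.pr (x.cpr a c) (x.cpr b d)"
  note Mp = y.pr[of "x.cpr a c" "x.cpr b d", folded M_def]
  have M: "M \<in> Ar C" "dm M = B2 ?X" "cd M = B2 ?Y" "st (j1 ?Y) \<cdot> M = x.cpr a c" "st (j2 ?Y) \<cdot> M = x.cpr b d"
    using Mp f ac bd by simp_all
  note dd = dgl[OF XY(1)] cdg[OF XY(2)]
  have M1: "M \<cdot> j1 ?X = y.pr a b"
    apply (rule y.pr_uniq) using M f XY ac bd comp_assoc[of "j1 ?X" M "st (j1 ?Y)"] comp_assoc[of "j1 ?X" M "st (j2 ?Y)"]
      by simp_all
  have M2: "M \<cdot> j2 ?X = y.pr c d"
    apply (rule y.pr_uniq) using M f XY ac bd comp_assoc[of "j2 ?X" M "st (j1 ?Y)"] comp_assoc[of "j2 ?X" M "st (j2 ?Y)"]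
      by simp_all
  have cM: "cdg ?Y \<cdot> M = x.cpr (op2 a b) (op2 c d)"
    apply (rule x.cpr_uniq) using M f XY dd M1 M2 comp_assoc[of "j1 ?X" M "cdg ?Y"] comp_assoc[of "j2 ?X" M "cdg ?Y"]
    unfolding op2_def by simp_all
  have Md: "M \<cdot> dgl ?X = y.pr (op1 a c) (op1 b d)"
    apply (rule y.pr_uniq) using M f XY dd ac bd comp_assoc[of "dgl ?X" M "st (j1 ?Y)"] comp_assoc[of "dgl ?X" M "st (j2 ?Y)"]
    unfolding op1_def by simp_all
  have o: "dm (op2 a b) = ?X" "cd (op1 a c) = ?Y" using op2_ar[of a b] op1_ar[of a c] f by simp_all
  show ?thesis unfolding op1_def[of "op2 a b"] op2_def[of "op1 a c"] o
    using cM[symmetric] Md M dd comp_assoc[of "dgl ?X" M "cdg ?Y"] f by simp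
qed


lemma op1_bil_l: assumes "par f f'" "g \<in> Ar C" "dm g = cd f" shows "g \<cdot> op1 f f' = op1 (g \<cdot> f) (g \<cdot> f')"
proof -
  let ?X = "dm f"
  interpret x: obp C ?X ?X "B2 ?X" "j1 ?X" "j2 ?X" using obX assms by simp
  have X: "?X \<in> Ob C" using assms by simp
  note c = x.cpr[of f f'] note dd = dgl[OF X]
  have "g \<cdot> x.cpr f f' = x.cpr (g \<cdot> f) (g \<cdot> f')"
    apply (rule x.cpr_uniq) using assms c comp_assoc[of "j1 ?X" "x.cpr f f'" g] comp_assoc[of "j2 ?X" "x.cpr f f'" g] by simp_all
  then show ?thesis unfolding op1_def using assms c dd comp_assoc[of "dgl ?X" "x.cpr f f'" g] by simp
qed

lemma op2_bil_r: assumes "par g g'" "f \<in> Ar C" "dm g = cd f" shows "op2 g g' \<cdot> f = op2 (g \<cdot> f) (g' \<cdot> f)"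
proof -
  let ?Y = "cd g"
  interpret y: obp C ?Y ?Y "B2 ?Y" "j1 ?Y" "j2 ?Y" using obX assms by simp
  have Y: "?Y \<in> Ob C" using assms by simp
  note c = y.pr[of g g'] note dd = cdg[OF Y]
  have "y.pr g g' \<cdot> f = y.pr (g \<cdot> f) (g' \<cdot> f)"
    apply (rule y.pr_uniq) using assms c comp_assoc[of f "y.pr g g'" "st (j1 ?Y)"] comp_assoc[of f "y.pr g g'" "st (j2 ?Y)"] by simp_all
  then show ?thesis unfolding op2_def using assms c dd comp_assoc[of f "y.pr g g'" "cdg ?Y"] by simp
qed

lemma op1_inter: assumes "par a b" "par a c" "par a d"
  shows "op1 (op1 a b) (op1 c d) = op1 (op1 a c) (op1 b d)"
  using op_inter[OF assms] op_eq assms op1_ar by (metis (no_types, lifting))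

lemma op1_comm: assumes "par a b" shows "op1 a b = op1 b a"
proof -
  let ?z = "zr (dm a) (cd a)"
  have z: "par a ?z" using assms by simp
  have "op1 a b = op1 (op1 ?z a) (op1 b ?z)" using op1_zr[of a] op1_zr[of b] assms by simp
  also have "\<dots> = op1 (op1 ?z b) (op1 a ?z)" using op1_inter[of ?z a b ?z] assms z by simp
  also have "\<dots> = op1 b a" using op1_zr[of a] op1_zr[of b] assms by simp
  finally show ?thesis .
qed

lemma op1_assoc: assumes "par a b" "par a c" shows "op1 (op1 a b) c = op1 a (op1 b c)"
proof -
  let ?z = "zr (dm a) (cd a)"
  have "op1 (op1 a b) c = op1 (op1 a b) (op1 ?z c)" using op1_zr[of c] assms by simp
  also have "\<dots> = op1 (op1 a ?z) (op1 b c)" using op1_inter[of a b ?z c] assms by simp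
  also have "\<dots> = op1 a (op1 b c)" using op1_zr[of a] assms by simp
  finally show ?thesis .
qed

lemma op1_bil_r: assumes "par g g'" "f \<in> Ar C" "dm g = cd f" shows "op1 g g' \<cdot> f = op1 (g \<cdot> f) (g' \<cdot> f)"
  using op2_bil_r[OF assms] op_eq assms by simp

end

locale menr = pc C for C :: "('o,'m) star_cat" +
  fixes add :: "'m \<Rightarrow> 'm \<Rightarrow> 'm" (infixl "\<boxplus>" 65)
  assumes add_ar: "par f g \<Longrightarrow> f \<boxplus> g \<in> Ar C"
  and add_dm: "par f g \<Longrightarrow> dm (f \<boxplus> g) = dm f"
  and add_cd: "par f g \<Longrightarrow> cd (f \<boxplus> g) = cd f"
  and add_assoc: "par f g \<Longrightarrow> par f h \<Longrightarrow> (f \<boxplus> g) \<boxplus> h = f \<boxplus> (g \<boxplus> h)"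
  and add_comm: "par f g \<Longrightarrow> f \<boxplus> g = g \<boxplus> f"
  and add_zl: "f \<in> Ar C \<Longrightarrow> zr (dm f) (cd f) \<boxplus> f = f"
  and bil_l: "par f f' \<Longrightarrow> g \<in> Ar C \<Longrightarrow> dm g = cd f \<Longrightarrow> g \<cdot> (f \<boxplus> f') = g \<cdot> f \<boxplus> g \<cdot> f'"
  and bil_r: "par g g' \<Longrightarrow> f \<in> Ar C \<Longrightarrow> dm g = cd f \<Longrightarrow> (g \<boxplus> g') \<cdot> f = g \<cdot> f \<boxplus> g' \<cdot> f"

lemma (in pc) menr_op1: "menr C op1"
  unfolding menr_def menr_axioms_def
  using op1_ar op1_assoc op1_comm op1_zr op1_bil_l op1_bil_r pc_axioms by simp


context menr begin

lemma add_simps[simp]: "par f g \<Longrightarrow> f \<boxplus> g \<in> Ar C" "par f g \<Longrightarrow> dm (f \<boxplus> g) = dm f" "par f g \<Longrightarrow> cd (f \<boxplus> g) = cd f"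
  using add_ar add_dm add_cd by blast+

lemma add_zr[simp]: "f \<in> Ar C \<Longrightarrow> dm f = X \<Longrightarrow> cd f = Y \<Longrightarrow> zr X Y \<boxplus> f = f"
  "f \<in> Ar C \<Longrightarrow> dm f = X \<Longrightarrow> cd f = Y \<Longrightarrow> f \<boxplus> zr X Y = f"
proof -
  assume f: "f \<in> Ar C" "dm f = X" "cd f = Y"
  then show "zr X Y \<boxplus> f = f" using add_zl[of f] by simp
next
  assume f: "f \<in> Ar C" "dm f = X" "cd f = Y"
  then have "f \<boxplus> zr X Y = zr X Y \<boxplus> f" by (intro add_comm) (use f(2,3)[symmetric] f(1) in simp)
  then show "f \<boxplus> zr X Y = f" using add_zl[of f] f by simp
qed

lemma bp_id: assumes "obp C A1 A2 B s1 s2" shows "s1 \<cdot> st s1 \<boxplus> s2 \<cdot> st s2 = ID B"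
proof -
  interpret b: obp C A1 A2 B s1 s2 by fact
  let ?u = "s1 \<cdot> st s1 \<boxplus> s2 \<cdot> st s2"
  have u: "?u \<in> Ar C" "dm ?u = B" "cd ?u = B" by simp_all
  have 1: "st s1 \<cdot> ?u = st s1 \<cdot> (s1 \<cdot> st s1) \<boxplus> st s1 \<cdot> (s2 \<cdot> st s2)" by (rule bil_l) simp_all
  have 2: "st s1 \<cdot> (s1 \<cdot> st s1) = st s1" by (rule b.pij2) simp_all
  have 3: "st s1 \<cdot> (s2 \<cdot> st s2) = zr B A1" using b.pij2(3)[of "st s2"] by simp
  have 4: "st s1 \<cdot> ?u = st s1 \<cdot> ID B" unfolding 1 2 3 by (subst add_zr(2)) simp_all
  have 1: "st s2 \<cdot> ?u = st s2 \<cdot> (s1 \<cdot> st s1) \<boxplus> st s2 \<cdot> (s2 \<cdot> st s2)" by (rule bil_l) simp_all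
  have 2: "st s2 \<cdot> (s2 \<cdot> st s2) = st s2" by (rule b.pij2) simp_all
  have 3: "st s2 \<cdot> (s1 \<cdot> st s1) = zr B A2" using b.pij2(4)[of "st s1"] by simp
  have 5: "st s2 \<cdot> ?u = st s2 \<cdot> ID B" unfolding 1 2 3 by (subst add_zr(1)) simp_all
  show ?thesis by (rule b.jmono) (use u 4 5 in simp_all)
qed

lemma add_eq_op1: assumes "par f g" shows "f \<boxplus> g = op1 f g"
proof -
  let ?X = "dm f"
  interpret x: obp C ?X ?X "B2 ?X" "j1 ?X" "j2 ?X" using obX assms by simp
  have X: "?X \<in> Ob C" using assms by simp
  note c = x.cpr[of f g] note dd = dgl[OF X]
  let ?k = "x.cpr f g" and ?D = "dgl ?X"
  have "op1 f g = ?k \<cdot> (ID (B2 ?X) \<cdot> ?D)" unfolding op1_def using dd by simp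
  also have "\<dots> = ?k \<cdot> ((j1 ?X \<cdot> st (j1 ?X) \<boxplus> j2 ?X \<cdot> st (j2 ?X)) \<cdot> ?D)"
    using bp_id[OF obX[OF X]] by simp
  also have "\<dots> = ?k \<cdot> (j1 ?X \<boxplus> j2 ?X)"
    using bil_r[of "j1 ?X \<cdot> st (j1 ?X)" "j2 ?X \<cdot> st (j2 ?X)" ?D] dd
      comp_assoc[of ?D "st (j1 ?X)" "j1 ?X"] comp_assoc[of ?D "st (j2 ?X)" "j2 ?X"] by simp
  also have "\<dots> = f \<boxplus> g" using bil_l[of "j1 ?X" "j2 ?X" ?k] c assms by simp
  finally show ?thesis by simp
qed

end

lemma (in pc) menr_unique: assumes "menr C a1" "menr C a2" "par f g" shows "a1 f g = a2 f g"
  using menr.add_eq_op1[OF assms(1,3)] menr.add_eq_op1[OF assms(2,3)] by simp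


context menr begin

lemma menr_st: "menr C (\<lambda>f g. st (st f \<boxplus> st g))"
proof -
  let ?a = "\<lambda>f g. st (st f \<boxplus> st g)"
  have ar: "\<And>f g. par f g \<Longrightarrow> ?a f g \<in> Ar C \<and> dm (?a f g) = dm f \<and> cd (?a f g) = cd f" by simp
  have assoc: "\<And>f g h. par f g \<Longrightarrow> par f h \<Longrightarrow> ?a (?a f g) h = ?a f (?a g h)"
  proof -
    fix f g h assume "par f g" "par f h"
    then show "?a (?a f g) h = ?a f (?a g h)" using add_assoc[of "st f" "st g" "st h"] by simp
  qed
  have comm: "\<And>f g. par f g \<Longrightarrow> ?a f g = ?a g f"
  proof -
    fix f g assume "par f g"
    then show "?a f g = ?a g f" using add_comm[of "st f" "st g"] by simp
  qed
  have zl: "\<And>f. f \<in> Ar C \<Longrightarrow> ?a (zr (dm f) (cd f)) f = f" by simp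
  have bl: "\<And>f f' g. par f f' \<Longrightarrow> g \<in> Ar C \<Longrightarrow> dm g = cd f \<Longrightarrow> g \<cdot> ?a f f' = ?a (g \<cdot> f) (g \<cdot> f')"
  proof -
    fix f f' g assume a: "par f f'" "g \<in> Ar C" "dm g = cd f"
    let ?S = "st f \<boxplus> st f'"
    have "g \<cdot> st ?S = st (?S \<cdot> st g)" using a by simp
    also have "?S \<cdot> st g = st f \<cdot> st g \<boxplus> st f' \<cdot> st g" using a by (intro bil_r) simp_all
    finally show "g \<cdot> ?a f f' = ?a (g \<cdot> f) (g \<cdot> f')" using a by simp
  qed
  have br: "\<And>g g' f. par g g' \<Longrightarrow> f \<in> Ar C \<Longrightarrow> dm g = cd f \<Longrightarrow> ?a g g' \<cdot> f = ?a (g \<cdot> f) (g' \<cdot> f)"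
  proof -
    fix g g' f assume a: "par g g'" "f \<in> Ar C" "dm g = cd f"
    let ?S = "st g \<boxplus> st g'"
    have "st ?S \<cdot> f = st (st f \<cdot> ?S)" using a by simp
    also have "st f \<cdot> ?S = st f \<cdot> st g \<boxplus> st f \<cdot> st g'" using a by (intro bil_l) simp_all
    finally show "?a g g' \<cdot> f = ?a (g \<cdot> f) (g' \<cdot> f)" using a by simp
  qed
  show ?thesis unfolding menr_def menr_axioms_def using pc_axioms ar assoc comm zl bl br by blast
qed

lemma st_add: assumes "par f g" shows "st (f \<boxplus> g) = st f \<boxplus> st g"
proof -
  have "st (st (st f) \<boxplus> st (st g)) = st f \<boxplus> st g"
    using menr_unique[OF menr_st menr_axioms, of "st f" "st g"] assms by simp
  then show ?thesis using assms by simp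
qed

lemma add_inv_uniq: assumes "par x p" "par x y" "x \<boxplus> p = zr (dm x) (cd x)" "y \<boxplus> p = zr (dm x) (cd x)" shows "x = y"
proof -
  have "x = x \<boxplus> zr (dm x) (cd x)" using assms by simp
  also have "\<dots> = x \<boxplus> (p \<boxplus> y)" using assms(4) add_comm[of y p] assms(1,2) by simp
  also have "\<dots> = (x \<boxplus> p) \<boxplus> y" using add_assoc[of x p y, symmetric] assms(1,2) by simp
  also have "\<dots> = y" using assms by simp
  finally show ?thesis .
qed

end


context pc begin

lemma kernel_D: assumes "kernel C f m"
  shows "f \<in> Ar C" "m \<in> Ar C" "cd m = dm f" "f \<cdot> m = zr (dm m) (cd f)"
  using assms zr_eq unfolding kernel_def by blast+

lemma kernel_fac: assumes "kernel C f m" "g \<in> Ar C" "cd g = dm f" "f \<cdot> g = zr (dm g) (cd f)"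
  shows "\<exists>h. h \<in> Ar C \<and> dm h = dm g \<and> cd h = dm m \<and> m \<cdot> h = g"
proof -
  have k: "f \<in> Ar C" using kernel_D[OF assms(1)] by simp
  have "zero_mor C (dm g) (cd f) (f \<cdot> g)" using assms(4) zr_prop[of "dm g" "cd f"] assms(2) k by simp
  then have "\<exists>!h. h \<in> Hm C (dm g) (dm m) \<and> m \<cdot> h = g" using assms(1,2,3) unfolding kernel_def by blast
  then show ?thesis by auto
qed

lemma isom: "isometry C m \<Longrightarrow> st m \<cdot> m = ID (dm m)" unfolding isometry_def .

lemma R4: assumes "X \<in> Ob C" "orthonormal_biproduct C X X B s1 s2" "d \<in> Ar C" "dm d = X" "cd d = B"
   "st s1 \<cdot> d = ID X" "st s2 \<cdot> d = ID X" shows "\<exists>f. f \<in> Ar C \<and> kernel C f d"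
proof -
  have "d \<in> Hm C X B" using assms by simp
  then show ?thesis using ph assms unfolding pre_hilbert_def by blast
qed

end

context menr begin

lemma add_swap4: assumes "par x y" "par x z" "par x w"
  shows "(x \<boxplus> y) \<boxplus> (z \<boxplus> w) = (x \<boxplus> z) \<boxplus> (y \<boxplus> w)"
proof -
  have "(x \<boxplus> y) \<boxplus> (z \<boxplus> w) = x \<boxplus> (y \<boxplus> (z \<boxplus> w))" using assms add_assoc[of x y "z \<boxplus> w"] by simp
  also have "y \<boxplus> (z \<boxplus> w) = (y \<boxplus> z) \<boxplus> w" using assms add_assoc[of y z w] by simp
  also have "y \<boxplus> z = z \<boxplus> y" using assms add_comm[of y z] by simp
  also have "(z \<boxplus> y) \<boxplus> w = z \<boxplus> (y \<boxplus> w)" using assms add_assoc[of z y w] by simp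
  also have "x \<boxplus> (z \<boxplus> (y \<boxplus> w)) = (x \<boxplus> z) \<boxplus> (y \<boxplus> w)" using assms add_assoc[of x z "y \<boxplus> w"] by simp
  finally show ?thesis .
qed

lemma bp_decomp: assumes "obp C A1 A2 B s1 s2" "x \<in> Ar C" "cd x = B"
  shows "x = s1 \<cdot> (st s1 \<cdot> x) \<boxplus> s2 \<cdot> (st s2 \<cdot> x)"
proof -
  interpret b: obp C A1 A2 B s1 s2 by fact
  have "x = ID B \<cdot> x" using assms by simp
  also have "\<dots> = (s1 \<cdot> st s1 \<boxplus> s2 \<cdot> st s2) \<cdot> x" using bp_id[OF assms(1)] by simp
  also have "\<dots> = (s1 \<cdot> st s1) \<cdot> x \<boxplus> (s2 \<cdot> st s2) \<cdot> x" using assms by (intro bil_r) simp_all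
  also have "(s1 \<cdot> st s1) \<cdot> x = s1 \<cdot> (st s1 \<cdot> x)" using assms by (intro comp_assoc) simp_all
  also have "(s2 \<cdot> st s2) \<cdot> x = s2 \<cdot> (st s2 \<cdot> x)" using assms by (intro comp_assoc) simp_all
  finally show ?thesis .
qed

lemma bp_proj: assumes "obp C A1 A2 B s1 s2" "u \<in> Ar C" "v \<in> Ar C" "dm v = dm u" "cd u = A1" "cd v = A2"
  shows "st s1 \<cdot> (s1 \<cdot> u \<boxplus> s2 \<cdot> v) = u" "st s2 \<cdot> (s1 \<cdot> u \<boxplus> s2 \<cdot> v) = v"
proof -
  interpret b: obp C A1 A2 B s1 s2 by fact
  have "st s1 \<cdot> (s1 \<cdot> u \<boxplus> s2 \<cdot> v) = st s1 \<cdot> (s1 \<cdot> u) \<boxplus> st s1 \<cdot> (s2 \<cdot> v)"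
    using assms by (intro bil_l) simp_all
  also have "\<dots> = u" using assms b.pij2[of u] b.pij2[of v] by simp
  finally show "st s1 \<cdot> (s1 \<cdot> u \<boxplus> s2 \<cdot> v) = u" .
  have "st s2 \<cdot> (s1 \<cdot> u \<boxplus> s2 \<cdot> v) = st s2 \<cdot> (s1 \<cdot> u) \<boxplus> st s2 \<cdot> (s2 \<cdot> v)"
    using assms by (intro bil_l) simp_all
  also have "\<dots> = v" using assms b.pij2[of u] b.pij2[of v] by simp
  finally show "st s2 \<cdot> (s1 \<cdot> u \<boxplus> s2 \<cdot> v) = v" .
qed

lemma bp_sq: assumes "obp C A1 A2 B s1 s2" "x \<in> Ar C" "cd x = B"
  shows "st x \<cdot> x = st (st s1 \<cdot> x) \<cdot> (st s1 \<cdot> x) \<boxplus> st (st s2 \<cdot> x) \<cdot> (st s2 \<cdot> x)"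
proof -
  interpret b: obp C A1 A2 B s1 s2 by fact
  have "st x \<cdot> x = st x \<cdot> (s1 \<cdot> (st s1 \<cdot> x) \<boxplus> s2 \<cdot> (st s2 \<cdot> x))" using bp_decomp[OF assms] by simp
  also have "\<dots> = st x \<cdot> (s1 \<cdot> (st s1 \<cdot> x)) \<boxplus> st x \<cdot> (s2 \<cdot> (st s2 \<cdot> x))"
    using assms by (intro bil_l) simp_all
  also have "st x \<cdot> (s1 \<cdot> (st s1 \<cdot> x)) = (st x \<cdot> s1) \<cdot> (st s1 \<cdot> x)" using assms by (intro comp_assoc[symmetric]) simp_all
  also have "st x \<cdot> (s2 \<cdot> (st s2 \<cdot> x)) = (st x \<cdot> s2) \<cdot> (st s2 \<cdot> x)" using assms by (intro comp_assoc[symmetric]) simp_all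
  also have "st x \<cdot> s1 = st (st s1 \<cdot> x)" using assms by simp
  also have "st x \<cdot> s2 = st (st s2 \<cdot> x)" using assms by simp
  finally show ?thesis .
qed

end


context menr begin

lemma neg_id: assumes X: "X \<in> Ob C" shows "\<exists>n. n \<in> Ar C \<and> dm n = X \<and> cd n = X \<and> ID X \<boxplus> n = zr X X"
proof -
  obtain B s1 s2 where ob: "obp C X X B s1 s2" using obX[OF X] by blast
  interpret b: obp C X X B s1 s2 by fact
  have obo: "orthonormal_biproduct C X X B s1 s2" by (rule b.ob)
  define D where "D = b.pr (ID X) (ID X)"
  have D: "D \<in> Ar C" "dm D = X" "cd D = B" "st s1 \<cdot> D = ID X" "st s2 \<cdot> D = ID X"
    unfolding D_def using b.pr[of "ID X" "ID X"] X by simp_all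
  obtain f where f: "f \<in> Ar C" "kernel C f D" using R4[OF X obo D] by blast
  note fk = kernel_D[OF f(2)]
  define Y where "Y = cd f"
  have fB: "dm f = B" using fk D by simp
  have Y: "Y \<in> Ob C" using f Y_def by simp
  have fD: "f \<cdot> D = zr X Y" using fk D Y_def by simp
  have Ds: "D = s1 \<boxplus> s2" using bp_decomp[OF ob D(1,3)] D X by simp
  define d where "d = f \<cdot> s1"
  define d' where "d' = f \<cdot> s2"
  have d: "d \<in> Ar C" "dm d = X" "cd d = Y" "d' \<in> Ar C" "dm d' = X" "cd d' = Y"
    unfolding d_def d'_def Y_def using f fB by simp_all
  have dd': "d \<boxplus> d' = zr X Y"
  proof -
    have "f \<cdot> (s1 \<boxplus> s2) = d \<boxplus> d'" unfolding d_def d'_def using f fB by (intro bil_l) simp_all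
    then show ?thesis using fD Ds by simp
  qed
  have mono: "x = y" if xy: "x \<in> Ar C" "y \<in> Ar C" "cd x = X" "cd y = X" "dm y = dm x" "d \<cdot> x = d \<cdot> y" for x y
  proof -
    define g where "g = s1 \<cdot> x \<boxplus> s2 \<cdot> y"
    have g: "g \<in> Ar C" "dm g = dm x" "cd g = B" unfolding g_def using xy by simp_all
    have "f \<cdot> g = f \<cdot> (s1 \<cdot> x) \<boxplus> f \<cdot> (s2 \<cdot> y)" unfolding g_def using xy f fB by (intro bil_l) simp_all
    also have "f \<cdot> (s1 \<cdot> x) = d \<cdot> x" unfolding d_def using xy f fB by (intro comp_assoc[symmetric]) simp_all
    also have "f \<cdot> (s2 \<cdot> y) = d' \<cdot> y" unfolding d'_def using xy f fB by (intro comp_assoc[symmetric]) simp_all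
    also have "d \<cdot> x \<boxplus> d' \<cdot> y = (d \<boxplus> d') \<cdot> y" using xy d that(6) by (subst bil_r) simp_all
    also have "\<dots> = zr (dm g) (cd f)" using dd' xy g Y_def Y by simp
    finally have fg: "f \<cdot> g = zr (dm g) (cd f)" .
    obtain h where h: "h \<in> Ar C" "dm h = dm g" "cd h = dm D" "D \<cdot> h = g"
      using kernel_fac[OF f(2) g(1) _ fg] g fB by auto
    have "x = st s1 \<cdot> g" unfolding g_def using bp_proj[OF ob, of x y] xy by simp
    also have "\<dots> = (st s1 \<cdot> D) \<cdot> h" using h D by (subst comp_assoc) simp_all
    also have "\<dots> = h" using D h by simp
    finally have 1: "x = h" .
    have "y = st s2 \<cdot> g" unfolding g_def using bp_proj[OF ob, of x y] xy by simp
    also have "\<dots> = (st s2 \<cdot> D) \<cdot> h" using h D by (subst comp_assoc) simp_all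
    also have "\<dots> = h" using D h by simp
    finally show ?thesis using 1 by simp
  qed
  have epi: "u = v" if uv: "u \<in> Ar C" "v \<in> Ar C" "dm u = X" "dm v = X" "cd v = cd u" "u \<cdot> st d = v \<cdot> st d" for u v
  proof -
    have 1: "st (u \<cdot> st d) = d \<cdot> st u" "st (v \<cdot> st d) = d \<cdot> st v" using uv(1-5) d by simp_all
    have 2: "d \<cdot> st u = d \<cdot> st v" using 1 uv(6) by metis
    have "st u = st v" by (rule mono) (use uv d 2 in simp_all)
    then show ?thesis using uv by (metis st_st)
  qed
  define nb where "nb = st D"
  have nb: "nb \<in> Ar C" "dm nb = B" "cd nb = X" "nb = st s1 \<boxplus> st s2"
    unfolding nb_def using D Ds st_add[of s1 s2] by simp_all
  obtain n where n: "kernel C nb n" "isometry C n" using ker_ex[OF nb(1)] by blast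
  note nk = kernel_D[OF n(1)]
  define N where "N = dm n"
  have n1: "n \<in> Ar C" "dm n = N" "cd n = B" "nb \<cdot> n = zr N X" "st n \<cdot> n = ID N"
    using nk nb isom[OF n(2)] N_def by simp_all
  have N: "N \<in> Ob C" using n1 by (metis dc_ob)
  define a where "a = st s1 \<cdot> n"
  define b where "b = st s2 \<cdot> n"
  have ab: "a \<in> Ar C" "dm a = N" "cd a = X" "b \<in> Ar C" "dm b = N" "cd b = X"
    unfolding a_def b_def using n1 by simp_all
  have ab0: "a \<boxplus> b = zr N X"
  proof -
    have "(st s1 \<boxplus> st s2) \<cdot> n = a \<boxplus> b" unfolding a_def b_def using n1 by (intro bil_r) simp_all
    then show ?thesis using n1 nb by simp
  qed
  have sq: "ID N = st a \<cdot> a \<boxplus> st b \<cdot> b"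
    using bp_sq[OF ob n1(1,3)] n1 unfolding a_def b_def by simp
  define p where "p = st a \<cdot> b"
  have p: "p \<in> Ar C" "dm p = N" "cd p = N" unfolding p_def using ab by simp_all
  have e1: "st a \<cdot> a \<boxplus> p = zr N N"
  proof -
    have "st a \<cdot> (a \<boxplus> b) = st a \<cdot> a \<boxplus> p" unfolding p_def using ab by (intro bil_l) simp_all
    then show ?thesis using ab0 ab N by simp
  qed
  have e2: "st b \<cdot> b \<boxplus> p = zr N N"
  proof -
    have "st (a \<boxplus> b) = st a \<boxplus> st b" using ab by (intro st_add) simp_all
    then have sab: "st a \<boxplus> st b = zr X N" using ab0 N X by simp
    have "(st a \<boxplus> st b) \<cdot> b = p \<boxplus> st b \<cdot> b" unfolding p_def using ab by (intro bil_r) simp_all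
    then have "p \<boxplus> st b \<cdot> b = zr N N" using sab ab N by simp
    then show ?thesis using add_comm[of p "st b \<cdot> b"] p ab by simp
  qed
  have aabb: "st a \<cdot> a = st b \<cdot> b" using add_inv_uniq[of "st a \<cdot> a" p "st b \<cdot> b"] e1 e2 p ab by simp
  have idN: "ID N = st a \<cdot> a \<boxplus> st a \<cdot> a" using sq aabb by simp
  define G where "G = b.pr (st d) (st d')"
  have G: "G \<in> Ar C" "dm G = Y" "cd G = B" "st s1 \<cdot> G = st d" "st s2 \<cdot> G = st d'"
    unfolding G_def using b.pr[of "st d" "st d'"] d by simp_all
  have nbG: "nb \<cdot> G = zr (dm G) (cd nb)"
  proof -
    have "(st s1 \<boxplus> st s2) \<cdot> G = st d \<boxplus> st d'" using G by (subst bil_r) simp_all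
    also have "\<dots> = st (d \<boxplus> d')" using d by (intro st_add[symmetric]) simp_all
    also have "\<dots> = zr Y X" using dd' X Y by simp
    finally show ?thesis using nb G by simp
  qed
  obtain u where u: "u \<in> Ar C" "dm u = Y" "cd u = N" "n \<cdot> u = G"
    using kernel_fac[OF n(1) G(1) _ nbG] G nb N_def by auto
  have au: "a \<cdot> u = st d" unfolding a_def using u n1 G by (subst comp_assoc) simp_all
  define w where "w = st a \<boxplus> st a"
  have w: "w \<in> Ar C" "dm w = X" "cd w = N" unfolding w_def using ab by simp_all
  have wa: "w \<cdot> a = ID N" unfolding w_def using idN ab by (subst bil_r) simp_all
  have aw: "a \<cdot> w = ID X"
  proof (rule epi)
    have "(a \<cdot> w) \<cdot> st d = (a \<cdot> w) \<cdot> (a \<cdot> u)" using au by simp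
    also have "\<dots> = a \<cdot> (w \<cdot> (a \<cdot> u))" using ab w u by (subst comp_assoc) simp_all
    also have "w \<cdot> (a \<cdot> u) = (w \<cdot> a) \<cdot> u" using ab w u by (subst comp_assoc) simp_all
    also have "a \<cdot> ((w \<cdot> a) \<cdot> u) = st d" using wa au u by simp
    finally show "(a \<cdot> w) \<cdot> st d = ID X \<cdot> st d" using d by simp
  qed (use ab w X in simp_all)
  define ng where "ng = a \<cdot> ((p \<boxplus> p) \<cdot> w)"
  have ng: "ng \<in> Ar C" "dm ng = X" "cd ng = X" unfolding ng_def using ab p w by simp_all
  have "ID X \<boxplus> ng = a \<cdot> w \<boxplus> a \<cdot> ((p \<boxplus> p) \<cdot> w)" using aw ng_def by simp
  also have "\<dots> = a \<cdot> (w \<boxplus> (p \<boxplus> p) \<cdot> w)" using ab p w by (subst bil_l) simp_all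
  also have "w \<boxplus> (p \<boxplus> p) \<cdot> w = (ID N \<boxplus> (p \<boxplus> p)) \<cdot> w"
  proof -
    have "(ID N \<boxplus> (p \<boxplus> p)) \<cdot> w = ID N \<cdot> w \<boxplus> (p \<boxplus> p) \<cdot> w" by (rule bil_r) (use p w N in simp_all)
    then show ?thesis using w by simp
  qed
  also have "ID N \<boxplus> (p \<boxplus> p) = (st a \<cdot> a \<boxplus> p) \<boxplus> (st b \<cdot> b \<boxplus> p)"
    using sq add_swap4[of "st a \<cdot> a" "st b \<cdot> b" p p] ab p by simp
  also have "\<dots> = zr N N" using e1 e2 N by simp
  also have "a \<cdot> (zr N N \<cdot> w) = zr X X" using ab w N X by simp
  finally show ?thesis using ng by blast
qed

lemma neg_ex: assumes "f \<in> Ar C" shows "\<exists>g. g \<in> Ar C \<and> dm g = dm f \<and> cd g = cd f \<and> f \<boxplus> g = zr (dm f) (cd f)"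
proof -
  obtain n where n: "n \<in> Ar C" "dm n = dm f" "cd n = dm f" "ID (dm f) \<boxplus> n = zr (dm f) (dm f)"
    using neg_id[of "dm f"] assms by auto
  have "f \<cdot> (ID (dm f) \<boxplus> n) = f \<boxplus> f \<cdot> n" using n assms by (subst bil_l) simp_all
  then have "f \<boxplus> f \<cdot> n = zr (dm f) (cd f)" using n assms by simp
  then show ?thesis using n assms by (intro exI[of _ "f \<cdot> n"]) simp
qed

end


context menr begin

definition Gr :: "'o \<Rightarrow> 'o \<Rightarrow> 'm monoid" where
  "Gr X Y = \<lparr>carrier = Hm C X Y, mult = add, one = zr X Y\<rparr>"

lemma Gr_grp: assumes "X \<in> Ob C" "Y \<in> Ob C" shows "comm_group (Gr X Y)"
proof (rule comm_groupI)
  fix x y assume "x \<in> carrier (Gr X Y)" "y \<in> carrier (Gr X Y)"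
  then show "x \<otimes>\<^bsub>Gr X Y\<^esub> y \<in> carrier (Gr X Y)" unfolding Gr_def by simp
next
  show "\<one>\<^bsub>Gr X Y\<^esub> \<in> carrier (Gr X Y)" unfolding Gr_def using assms by simp
next
  fix x y z assume "x \<in> carrier (Gr X Y)" "y \<in> carrier (Gr X Y)" "z \<in> carrier (Gr X Y)"
  then show "x \<otimes>\<^bsub>Gr X Y\<^esub> y \<otimes>\<^bsub>Gr X Y\<^esub> z = x \<otimes>\<^bsub>Gr X Y\<^esub> (y \<otimes>\<^bsub>Gr X Y\<^esub> z)"
    unfolding Gr_def using add_assoc by simp
next
  fix x y assume "x \<in> carrier (Gr X Y)" "y \<in> carrier (Gr X Y)"
  then show "x \<otimes>\<^bsub>Gr X Y\<^esub> y = y \<otimes>\<^bsub>Gr X Y\<^esub> x" unfolding Gr_def using add_comm by simp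
next
  fix x assume "x \<in> carrier (Gr X Y)"
  then show "\<one>\<^bsub>Gr X Y\<^esub> \<otimes>\<^bsub>Gr X Y\<^esub> x = x" unfolding Gr_def by simp
next
  fix x assume x: "x \<in> carrier (Gr X Y)"
  then have x': "x \<in> Ar C" "dm x = X" "cd x = Y" unfolding Gr_def by simp_all
  obtain g where g: "g \<in> Ar C" "dm g = X" "cd g = Y" "x \<boxplus> g = zr X Y" using neg_ex[OF x'(1)] x' by auto
  have "g \<boxplus> x = zr X Y" using g x' add_comm[of x g] by simp
  then show "\<exists>y\<in>carrier (Gr X Y). y \<otimes>\<^bsub>Gr X Y\<^esub> x = \<one>\<^bsub>Gr X Y\<^esub>" unfolding Gr_def using g by auto
qed

definition zm :: "int \<Rightarrow> 'm \<Rightarrow> 'm" where "zm k f = f [^]\<^bsub>Gr (dm f) (cd f)\<^esub> k"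

lemma Gr_c: "x \<in> carrier (Gr X Y) \<longleftrightarrow> x \<in> Ar C \<and> dm x = X \<and> cd x = Y" unfolding Gr_def by simp
lemma Gr_m: "x \<otimes>\<^bsub>Gr X Y\<^esub> y = x \<boxplus> y" unfolding Gr_def by simp
lemma Gr_1: "\<one>\<^bsub>Gr X Y\<^esub> = zr X Y" unfolding Gr_def by simp

lemma zm_ar[simp]: assumes "f \<in> Ar C" shows "zm k f \<in> Ar C" "dm (zm k f) = dm f" "cd (zm k f) = cd f"
proof -
  interpret G: comm_group "Gr (dm f) (cd f)" using Gr_grp assms by simp
  have "f \<in> carrier (Gr (dm f) (cd f))" using assms Gr_c by simp
  then have "zm k f \<in> carrier (Gr (dm f) (cd f))" unfolding zm_def by (rule G.int_pow_closed)
  then show "zm k f \<in> Ar C" "dm (zm k f) = dm f" "cd (zm k f) = cd f" using Gr_c by simp_all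
qed

lemma zm_add: assumes "f \<in> Ar C" shows "zm (i + j) f = zm i f \<boxplus> zm j f"
proof -
  interpret G: comm_group "Gr (dm f) (cd f)" using Gr_grp assms by simp
  show ?thesis unfolding zm_def using G.int_pow_mult[of f i j] assms Gr_c Gr_m by simp
qed

lemma zm_mult: assumes "f \<in> Ar C" shows "zm i (zm j f) = zm (j * i) f"
proof -
  interpret G: comm_group "Gr (dm f) (cd f)" using Gr_grp assms by simp
  have "zm i (zm j f) = (zm j f) [^]\<^bsub>Gr (dm f) (cd f)\<^esub> i" unfolding zm_def[of i "zm j f"] using assms by simp
  then show ?thesis unfolding zm_def using G.int_pow_pow[of f j i] assms Gr_c by simp
qed

lemma zm_1[simp]: assumes "f \<in> Ar C" shows "zm 1 f = f"
proof -
  interpret G: comm_group "Gr (dm f) (cd f)" using Gr_grp assms by simp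
  show ?thesis unfolding zm_def using assms Gr_c by simp
qed

lemma zm_0[simp]: assumes "f \<in> Ar C" shows "zm 0 f = zr (dm f) (cd f)"
  unfolding zm_def Gr_1[symmetric] by simp

lemma zm_distr: assumes "par f g" shows "zm k (f \<boxplus> g) = zm k f \<boxplus> zm k g"
proof -
  interpret G: comm_group "Gr (dm f) (cd f)" using Gr_grp assms by simp
  show ?thesis unfolding zm_def using G.int_pow_distrib[of f g k] assms Gr_c Gr_m by simp
qed

lemma zm_comp_l: assumes "f \<in> Ar C" "g \<in> Ar C" "dm g = cd f" shows "g \<cdot> zm k f = zm k (g \<cdot> f)"
proof -
  let ?G = "Gr (dm f) (cd f)" and ?H = "Gr (dm f) (cd g)"
  interpret G1: comm_group ?G using Gr_grp assms by simp
  interpret G2: comm_group ?H using Gr_grp assms by simp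
  have G: "group ?G" "group ?H" using G1.is_group G2.is_group by simp_all
  have h: "(\<lambda>x. g \<cdot> x) \<in> Group.hom ?G ?H" unfolding Group.hom_def using assms
    by (auto simp: Gr_c Gr_m intro: bil_l)
  show ?thesis unfolding zm_def using hom_int_pow[OF h _ G, of f k] assms Gr_c by simp
qed

lemma zm_comp_r: assumes "f \<in> Ar C" "g \<in> Ar C" "dm g = cd f" shows "zm k g \<cdot> f = zm k (g \<cdot> f)"
proof -
  let ?G = "Gr (dm g) (cd g)" and ?H = "Gr (dm f) (cd g)"
  interpret G1: comm_group ?G using Gr_grp assms by simp
  interpret G2: comm_group ?H using Gr_grp assms by simp
  have G: "group ?G" "group ?H" using G1.is_group G2.is_group by simp_all
  have h: "(\<lambda>x. x \<cdot> f) \<in> Group.hom ?G ?H" unfolding Group.hom_def using assms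
    by (auto simp: Gr_c Gr_m intro: bil_r)
  show ?thesis unfolding zm_def using hom_int_pow[OF h _ G, of g k] assms Gr_c by simp
qed

lemma zm_st: assumes "f \<in> Ar C" shows "st (zm k f) = zm k (st f)"
proof -
  let ?G = "Gr (dm f) (cd f)" and ?H = "Gr (cd f) (dm f)"
  interpret G1: comm_group ?G using Gr_grp assms by simp
  interpret G2: comm_group ?H using Gr_grp assms by simp
  have G: "group ?G" "group ?H" using G1.is_group G2.is_group by simp_all
  have h: "(\<lambda>x. st x) \<in> Group.hom ?G ?H" unfolding Group.hom_def using assms
    by (auto simp: Gr_c Gr_m intro: st_add)
  show ?thesis unfolding zm_def using hom_int_pow[OF h _ G, of f k] assms Gr_c by simp
qed

end


context menr begin

lemma graph_inv: assumes b: "b \<in> Ar C" and X: "dm b = X"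
  shows "\<exists>u. u \<in> Ar C \<and> dm u = X \<and> cd u = X \<and> u \<cdot> (ID X \<boxplus> st b \<cdot> b) = ID X \<and> (ID X \<boxplus> st b \<cdot> b) \<cdot> u = ID X"
proof -
  define W where "W = cd b"
  have XW: "X \<in> Ob C" "W \<in> Ob C" using b X W_def by auto
  obtain B s1 s2 where obo: "orthonormal_biproduct C X W B s1 s2" using bp_ex XW by blast
  have ob: "obp C X W B s1 s2" using obo pc_axioms by (simp add: obp_def obp_axioms_def)
  interpret o: obp C X W B s1 s2 by fact
  obtain nb where nb: "nb \<in> Ar C" "dm nb = X" "cd nb = W" "b \<boxplus> nb = zr X W"
    using neg_ex[OF b] X W_def by auto
  define q where "q = nb \<cdot> st s1 \<boxplus> st s2"
  have q: "q \<in> Ar C" "dm q = B" "cd q = W" unfolding q_def using nb by simp_all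
  define Gm where "Gm = s1 \<boxplus> s2 \<cdot> b"
  have Gm: "Gm \<in> Ar C" "dm Gm = X" "cd Gm = B" unfolding Gm_def using b X W_def by simp_all
  have qs1: "q \<cdot> s1 = nb"
  proof -
    have "q \<cdot> s1 = (nb \<cdot> st s1) \<cdot> s1 \<boxplus> st s2 \<cdot> s1" unfolding q_def using nb by (subst bil_r) simp_all
    also have "(nb \<cdot> st s1) \<cdot> s1 = nb" using nb by (subst comp_assoc) simp_all
    finally show ?thesis using nb by simp
  qed
  have qs2: "q \<cdot> s2 = ID W"
  proof -
    have "q \<cdot> s2 = (nb \<cdot> st s1) \<cdot> s2 \<boxplus> st s2 \<cdot> s2" unfolding q_def using nb by (subst bil_r) simp_all
    also have "(nb \<cdot> st s1) \<cdot> s2 = zr W W" using nb by (subst comp_assoc) simp_all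
    finally show ?thesis using nb XW by simp
  qed
  have qG: "q \<cdot> Gm = zr (dm Gm) (cd q)"
  proof -
    have "q \<cdot> Gm = q \<cdot> s1 \<boxplus> q \<cdot> (s2 \<cdot> b)" unfolding Gm_def using q b X W_def by (subst bil_l) simp_all
    also have "q \<cdot> (s2 \<cdot> b) = b" using q b W_def qs2 by (subst comp_assoc[symmetric]) simp_all
    finally show ?thesis using qs1 nb b X W_def add_comm[of nb b] Gm q by simp
  qed
  obtain m where m: "kernel C q m" "isometry C m" using ker_ex[OF q(1)] by blast
  note mk = kernel_D[OF m(1)]
  define K where "K = dm m"
  have m1: "m \<in> Ar C" "dm m = K" "cd m = B" "q \<cdot> m = zr K W" "st m \<cdot> m = ID K"
    using mk q isom[OF m(2)] K_def by simp_all
  have K: "K \<in> Ob C" using m1 by (metis dc_ob)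
  define t where "t = st s1 \<cdot> m"
  have t: "t \<in> Ar C" "dm t = K" "cd t = X" unfolding t_def using m1 by simp_all
  have r2m: "st s2 \<cdot> m = b \<cdot> t"
  proof -
    have "q \<cdot> m = (nb \<cdot> st s1) \<cdot> m \<boxplus> st s2 \<cdot> m" unfolding q_def using nb m1 by (subst bil_r) simp_all
    also have "(nb \<cdot> st s1) \<cdot> m = nb \<cdot> t" unfolding t_def using nb m1 by (subst comp_assoc) simp_all
    finally have 1: "nb \<cdot> t \<boxplus> st s2 \<cdot> m = zr K W" using m1 add_comm[of "nb \<cdot> t" "st s2 \<cdot> m"] nb t by simp
    have 2: "st s2 \<cdot> m \<boxplus> nb \<cdot> t = zr K W" using 1 add_comm[of "nb \<cdot> t" "st s2 \<cdot> m"] nb t m1 by simp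
    have "(b \<boxplus> nb) \<cdot> t = b \<cdot> t \<boxplus> nb \<cdot> t" using b nb t X W_def by (subst bil_r) simp_all
    then have 3: "b \<cdot> t \<boxplus> nb \<cdot> t = zr K W" using nb t XW by simp
    show ?thesis using add_inv_uniq[of "st s2 \<cdot> m" "nb \<cdot> t" "b \<cdot> t"] 2 3 m1 nb t b X W_def by simp
  qed
  have mG: "m = Gm \<cdot> t"
  proof -
    have "m = s1 \<cdot> t \<boxplus> s2 \<cdot> (b \<cdot> t)" using bp_decomp[OF ob m1(1,3)] r2m t_def by simp
    also have "s2 \<cdot> (b \<cdot> t) = (s2 \<cdot> b) \<cdot> t" using b t X W_def by (subst comp_assoc) simp_all
    also have "s1 \<cdot> t \<boxplus> (s2 \<cdot> b) \<cdot> t = Gm \<cdot> t" unfolding Gm_def using b t X W_def by (subst bil_r) simp_all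
    finally show ?thesis .
  qed
  obtain t' where t': "t' \<in> Ar C" "dm t' = X" "cd t' = K" "m \<cdot> t' = Gm"
    using kernel_fac[OF m(1) Gm(1) _ qG] Gm q K_def by auto
  have s1G: "st s1 \<cdot> Gm = ID X" unfolding Gm_def using bp_proj(1)[OF ob, of "ID X" b] b X XW W_def by simp
  have tt': "t \<cdot> t' = ID X"
  proof -
    have "t \<cdot> t' = st s1 \<cdot> (m \<cdot> t')" unfolding t_def using m1 t' by (subst comp_assoc) simp_all
    then show ?thesis using t' s1G by simp
  qed
  have t't: "t' \<cdot> t = ID K"
  proof -
    have "m \<cdot> (t' \<cdot> t) = Gm \<cdot> t" using m1 t' t by (subst comp_assoc[symmetric]) simp_all
    then have 1: "m \<cdot> (t' \<cdot> t) = m" using mG by simp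
    have "t' \<cdot> t = (st m \<cdot> m) \<cdot> (t' \<cdot> t)" using m1 t t' by simp
    also have "\<dots> = st m \<cdot> (m \<cdot> (t' \<cdot> t))" using m1 t t' by (subst comp_assoc) simp_all
    finally show ?thesis using 1 m1 by simp
  qed
  define E where "E = ID X \<boxplus> st b \<cdot> b"
  have E: "E \<in> Ar C" "dm E = X" "cd E = X" "st E = E" unfolding E_def using b X XW st_add[of "ID X" "st b \<cdot> b"] by simp_all
  have tEt: "st t \<cdot> (E \<cdot> t) = ID K"
  proof -
    have "ID K = st t \<cdot> t \<boxplus> st (b \<cdot> t) \<cdot> (b \<cdot> t)" using bp_sq[OF ob m1(1,3)] m1 r2m t_def by simp
    also have "st (b \<cdot> t) \<cdot> (b \<cdot> t) = st t \<cdot> ((st b \<cdot> b) \<cdot> t)"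
    proof -
      have "st (b \<cdot> t) \<cdot> (b \<cdot> t) = (st t \<cdot> st b) \<cdot> (b \<cdot> t)" using b t X by simp
      also have "\<dots> = st t \<cdot> (st b \<cdot> (b \<cdot> t))" using b t X by (subst comp_assoc) simp_all
      also have "st b \<cdot> (b \<cdot> t) = (st b \<cdot> b) \<cdot> t" using b t X by (subst comp_assoc) simp_all
      finally show ?thesis .
    qed
    also have "st t \<cdot> t \<boxplus> st t \<cdot> ((st b \<cdot> b) \<cdot> t) = st t \<cdot> (t \<boxplus> (st b \<cdot> b) \<cdot> t)"
      using b t X by (subst bil_l) simp_all
    also have "t \<boxplus> (st b \<cdot> b) \<cdot> t = E \<cdot> t"
    proof -
      have "E \<cdot> t = ID X \<cdot> t \<boxplus> (st b \<cdot> b) \<cdot> t" unfolding E_def by (rule bil_r) (use b t X XW in simp_all)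
      then show ?thesis using t by simp
    qed
    finally show ?thesis by simp
  qed
  define u where "u = t \<cdot> st t"
  have u: "u \<in> Ar C" "dm u = X" "cd u = X" "st u = u" unfolding u_def using t by simp_all
  have uE: "u \<cdot> E = ID X"
  proof -
    have "st t \<cdot> E = (st t \<cdot> E) \<cdot> (t \<cdot> t')" using tt' t E by simp
    also have "\<dots> = ((st t \<cdot> E) \<cdot> t) \<cdot> t'" using t t' E by (subst comp_assoc) simp_all
    also have "(st t \<cdot> E) \<cdot> t = ID K" using tEt t E by (subst comp_assoc) simp_all
    finally have 1: "st t \<cdot> E = t'" using t' by simp
    have "u \<cdot> E = t \<cdot> (st t \<cdot> E)" unfolding u_def using t E by (subst comp_assoc) simp_all
    then show ?thesis using 1 tt' by simp
  qed
  have Eu: "E \<cdot> u = ID X"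
  proof -
    have "st (u \<cdot> E) = E \<cdot> u" using u E by simp
    then show ?thesis using uE XW by simp
  qed
  show ?thesis using u uE Eu unfolding E_def by blast
qed

end


context menr begin

lemma sos: assumes X: "X \<in> Ob C" and k: "(1::nat) \<le> k"
  shows "\<exists>c. c \<in> Ar C \<and> dm c = X \<and> st c \<cdot> c = zm (int k) (ID X)"
  using k
proof (induct k rule: nat_induct_at_least)
  case base
  show ?case using X by (intro exI[of _ "ID X"]) simp
next
  case (Suc k)
  then obtain c where c: "c \<in> Ar C" "dm c = X" "st c \<cdot> c = zm (int k) (ID X)" by blast
  have "\<exists>B s1 s2. orthonormal_biproduct C (cd c) X B s1 s2" using bp_ex[of "cd c" X] X c by simp
  then obtain B s1 s2 where obo: "orthonormal_biproduct C (cd c) X B s1 s2" by blast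
  have ob: "obp C (cd c) X B s1 s2" using obo pc_axioms by (simp add: obp_def obp_axioms_def)
  interpret o: obp C "cd c" X B s1 s2 by fact
  define c' where "c' = s1 \<cdot> c \<boxplus> s2 \<cdot> ID X"
  have c': "c' \<in> Ar C" "dm c' = X" "cd c' = B" unfolding c'_def using c X by simp_all
  have p: "st s1 \<cdot> c' = c" "st s2 \<cdot> c' = ID X" unfolding c'_def using bp_proj[OF ob, of c "ID X"] c X by simp_all
  have "st c' \<cdot> c' = st c \<cdot> c \<boxplus> ID X" using bp_sq[OF ob c'(1,3)] p X by simp
  also have "\<dots> = zm (int k) (ID X) \<boxplus> zm 1 (ID X)" using c X by simp
  also have "\<dots> = zm (int (Suc k)) (ID X)" using zm_add[of "ID X" "int k" 1] X by (simp add: add.commute)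
  finally show ?case using c' by blast
qed

lemma inv_n: assumes X: "X \<in> Ob C" and k: "(1::int) \<le> k"
  shows "\<exists>u. u \<in> Ar C \<and> dm u = X \<and> cd u = X \<and> u \<cdot> zm k (ID X) = ID X \<and> zm k (ID X) \<cdot> u = ID X"
proof (cases "k = 1")
  case True
  then show ?thesis using X by (intro exI[of _ "ID X"]) simp
next
  case False
  then have k1: "(1::nat) \<le> nat (k - 1)" using k by simp
  obtain c where c: "c \<in> Ar C" "dm c = X" "st c \<cdot> c = zm (int (nat (k - 1))) (ID X)" using sos[OF X k1] by blast
  have "zm k (ID X) = zm 1 (ID X) \<boxplus> zm (k - 1) (ID X)" using zm_add[of "ID X" 1 "k - 1"] X by simp
  also have "\<dots> = ID X \<boxplus> st c \<cdot> c" using c k X by simp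
  finally show ?thesis using graph_inv[OF c(1,2)] by simp
qed

definition Dv :: "int \<Rightarrow> 'o \<Rightarrow> 'm" where
  "Dv k X = (SOME u. u \<in> Ar C \<and> dm u = X \<and> cd u = X \<and> u \<cdot> zm k (ID X) = ID X \<and> zm k (ID X) \<cdot> u = ID X)"

lemma Dv: assumes "X \<in> Ob C" "1 \<le> k"
  shows "Dv k X \<in> Ar C" "dm (Dv k X) = X" "cd (Dv k X) = X" "Dv k X \<cdot> zm k (ID X) = ID X" "zm k (ID X) \<cdot> Dv k X = ID X"
proof -
  note e = someI_ex[OF inv_n[OF assms], folded Dv_def]
  show "Dv k X \<in> Ar C" "dm (Dv k X) = X" "cd (Dv k X) = X" "Dv k X \<cdot> zm k (ID X) = ID X" "zm k (ID X) \<cdot> Dv k X = ID X"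
    using e by simp_all
qed

lemma inv_uniq: assumes "v \<in> Ar C" "n \<in> Ar C" "u \<in> Ar C" "dm v = X" "cd v = X" "dm n = X" "cd n = X" "dm u = X" "cd u = X"
  "v \<cdot> n = ID X" "n \<cdot> u = ID X" shows "v = u"
proof -
  have "v = v \<cdot> (n \<cdot> u)" using assms by simp
  also have "\<dots> = (v \<cdot> n) \<cdot> u" using assms by (subst comp_assoc) simp_all
  finally show ?thesis using assms by simp
qed

lemma zm_id: assumes "f \<in> Ar C" shows "zm k (ID (cd f)) \<cdot> f = zm k f" "f \<cdot> zm k (ID (dm f)) = zm k f"
  using zm_comp_r[of f "ID (cd f)" k] zm_comp_l[of "ID (dm f)" f k] assms by simp_all

lemma Dv_nat: assumes f: "f \<in> Ar C" and k: "1 \<le> k" shows "Dv k (cd f) \<cdot> f = f \<cdot> Dv k (dm f)"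
proof -
  let ?X = "dm f" and ?Y = "cd f"
  have XY: "?X \<in> Ob C" "?Y \<in> Ob C" using f by simp_all
  note DX = Dv[OF XY(1) k] and DY = Dv[OF XY(2) k]
  let ?DX = "Dv k ?X" and ?DY = "Dv k ?Y" and ?nX = "zm k (ID ?X)" and ?nY = "zm k (ID ?Y)"
  have nX: "?nX \<in> Ar C" "dm ?nX = ?X" "cd ?nX = ?X" using XY by simp_all
  have nY: "?nY \<in> Ar C" "dm ?nY = ?Y" "cd ?nY = ?Y" using XY by simp_all
  have "?DY \<cdot> f = ?DY \<cdot> (f \<cdot> (?nX \<cdot> ?DX))" using DX f by simp
  also have "f \<cdot> (?nX \<cdot> ?DX) = (f \<cdot> ?nX) \<cdot> ?DX" using f nX DX by (subst comp_assoc) simp_all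
  also have "f \<cdot> ?nX = ?nY \<cdot> f" using zm_id[OF f] by simp
  also have "(?nY \<cdot> f) \<cdot> ?DX = ?nY \<cdot> (f \<cdot> ?DX)" using f nY DX by (subst comp_assoc) simp_all
  also have "?DY \<cdot> (?nY \<cdot> (f \<cdot> ?DX)) = (?DY \<cdot> ?nY) \<cdot> (f \<cdot> ?DX)" using f nY DX DY by (subst comp_assoc) simp_all
  finally show ?thesis using DY f DX by simp
qed

lemma Dv_zm: assumes f: "f \<in> Ar C" and k: "1 \<le> k" shows "Dv k (cd f) \<cdot> zm k f = f"
proof -
  have Y: "cd f \<in> Ob C" using f by simp
  note DY = Dv[OF Y k]
  have "Dv k (cd f) \<cdot> zm k f = Dv k (cd f) \<cdot> (zm k (ID (cd f)) \<cdot> f)" using zm_id[OF f] by simp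
  also have "\<dots> = (Dv k (cd f) \<cdot> zm k (ID (cd f))) \<cdot> f" using f DY Y by (subst comp_assoc) simp_all
  finally show ?thesis using DY f by simp
qed

lemma Dv_mult: assumes X: "X \<in> Ob C" and k: "1 \<le> k" and l: "1 \<le> l"
  shows "Dv k X \<cdot> Dv l X = Dv (k * l) X"
proof -
  have kl: "1 \<le> k * l" using k l mult_mono[of 1 k 1 l] by simp
  note Dk = Dv[OF X k] and Dl = Dv[OF X l] and Dkl = Dv[OF X kl]
  have comm: "Dv k X \<cdot> Dv l X = Dv l X \<cdot> Dv k X" using Dv_nat[of "Dv l X" k] Dl k by simp
  have nkl: "zm (k * l) (ID X) = zm k (ID X) \<cdot> zm l (ID X)"
    using zm_mult[of "ID X" k l] zm_id(1)[of "zm l (ID X)" k] X by (simp add: mult.commute)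
  have nk: "zm k (ID X) \<in> Ar C" "dm (zm k (ID X)) = X" "cd (zm k (ID X)) = X" using X by simp_all
  have nl: "zm l (ID X) \<in> Ar C" "dm (zm l (ID X)) = X" "cd (zm l (ID X)) = X" using X by simp_all
  have "(Dv l X \<cdot> Dv k X) \<cdot> zm (k * l) (ID X) = Dv l X \<cdot> (Dv k X \<cdot> (zm k (ID X) \<cdot> zm l (ID X)))"
    unfolding nkl using Dk Dl nk nl by (subst comp_assoc) simp_all
  also have "Dv k X \<cdot> (zm k (ID X) \<cdot> zm l (ID X)) = (Dv k X \<cdot> zm k (ID X)) \<cdot> zm l (ID X)"
    using Dk Dl nk nl by (subst comp_assoc) simp_all
  also have "Dv l X \<cdot> ((Dv k X \<cdot> zm k (ID X)) \<cdot> zm l (ID X)) = ID X" using Dk Dl nl X by simp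
  finally have 1: "(Dv l X \<cdot> Dv k X) \<cdot> zm (k * l) (ID X) = ID X" .
  have "Dv l X \<cdot> Dv k X = Dv (k * l) X"
    by (rule inv_uniq[of _ "zm (k * l) (ID X)" _ X]) (use Dk Dl Dkl X 1 in simp_all)
  then show ?thesis using comm by simp
qed

lemma Dv_st: assumes X: "X \<in> Ob C" and k: "1 \<le> k" shows "st (Dv k X) = Dv k X"
proof -
  note D = Dv[OF X k]
  have n: "st (zm k (ID X)) = zm k (ID X)" using zm_st[of "ID X" k] X by simp
  have "st (zm k (ID X) \<cdot> Dv k X) = st (Dv k X) \<cdot> st (zm k (ID X))" by (rule st_comp) (use D X in simp_all)
  then have 1: "st (Dv k X) \<cdot> zm k (ID X) = ID X" using D X n by simp
  show ?thesis by (rule inv_uniq[of _ "zm k (ID X)" _ X]) (use D X 1 in simp_all)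
qed

lemma Dv_1: assumes X: "X \<in> Ob C" shows "Dv 1 X = ID X"
  using Dv[OF X, of 1] X by simp

end


context menr begin

definition Rm :: "int \<Rightarrow> int \<Rightarrow> 'm \<Rightarrow> 'm" where "Rm a b f = Dv b (cd f) \<cdot> zm a f"
definition sm :: "rat \<Rightarrow> 'm \<Rightarrow> 'm" where "sm q f = Rm (fst (quotient_of q)) (snd (quotient_of q)) f"

lemma Rm_ar: assumes "f \<in> Ar C" "1 \<le> b" shows "Rm a b f \<in> Ar C" "dm (Rm a b f) = dm f" "cd (Rm a b f) = cd f"
  unfolding Rm_def using Dv[of "cd f" b] assms by simp_all

lemma Rm_scale: assumes f: "f \<in> Ar C" and b: "1 \<le> b" and c: "1 \<le> c" shows "Rm (a * c) (b * c) f = Rm a b f"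
proof -
  have Y: "cd f \<in> Ob C" using f by simp
  note Db = Dv[OF Y b] and Dc = Dv[OF Y c]
  have "Rm (a * c) (b * c) f = (Dv b (cd f) \<cdot> Dv c (cd f)) \<cdot> zm c (zm a f)"
    unfolding Rm_def using Dv_mult[OF Y b c] zm_mult[OF f, of c a] by simp
  also have "\<dots> = Dv b (cd f) \<cdot> (Dv c (cd f) \<cdot> zm c (zm a f))" using Db Dc f by (subst comp_assoc) simp_all
  also have "Dv c (cd f) \<cdot> zm c (zm a f) = zm a f" using Dv_zm[of "zm a f" c] f c by simp
  finally show ?thesis unfolding Rm_def .
qed

lemma sm_rep: assumes f: "f \<in> Ar C" and b: "1 \<le> b" and q: "q = of_int a / of_int b" shows "sm q f = Rm a b f"
proof -
  obtain a' b' where qo: "quotient_of q = (a', b')" by (cases "quotient_of q") auto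
  have b': "b' > 0" using quotient_of_denom_pos[OF qo] .
  have q': "q = of_int a' / of_int b'" using quotient_of_div[OF qo] .
  have "(of_int a / of_int b :: rat) = of_int a' / of_int b'" using q q' by simp
  then have "(of_int a * of_int b' :: rat) = of_int a' * of_int b" using b b' by (simp add: frac_eq_eq)
  then have cross: "a * b' = a' * b" by (metis of_int_eq_iff of_int_mult)
  have "Rm a b f = Rm (a * b') (b * b') f" using Rm_scale[OF f b, of b' a] b' by simp
  also have "\<dots> = Rm (a' * b) (b' * b) f" using cross by (simp add: mult.commute)
  also have "\<dots> = Rm a' b' f" using Rm_scale[OF f _ b, of b' a'] b' by simp
  finally show ?thesis unfolding sm_def qo by simp
qed

lemma sm_ex: "\<exists>a b. 1 \<le> b \<and> (q::rat) = of_int a / of_int b"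
proof -
  obtain a b where qo: "quotient_of q = (a, b)" by (cases "quotient_of q") auto
  show ?thesis using quotient_of_denom_pos[OF qo] quotient_of_div[OF qo] by (intro exI[of _ a] exI[of _ b]) simp
qed

lemma sm_ar: assumes "f \<in> Ar C" shows "sm q f \<in> Ar C" "dm (sm q f) = dm f" "cd (sm q f) = cd f"
  unfolding sm_def using Rm_ar[OF assms] quotient_of_denom_pos' by (simp_all add: int_one_le_iff_zero_less)

lemma sm_1: assumes "f \<in> Ar C" shows "sm 1 f = f"
  unfolding sm_def Rm_def using Dv_1[of "cd f"] assms by simp

lemma sm_mult: assumes f: "f \<in> Ar C" shows "sm (p * q) f = sm p (sm q f)"
proof -
  obtain a1 b1 where p: "1 \<le> b1" "p = of_int a1 / of_int b1" using sm_ex by blast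
  obtain a2 b2 where q: "1 \<le> b2" "q = of_int a2 / of_int b2" using sm_ex by blast
  have b12: "1 \<le> b1 * b2" using p q mult_mono[of 1 b1 1 b2] by simp
  have pq: "p * q = of_int (a1 * a2) / of_int (b1 * b2)" using p q by simp
  have Y: "cd f \<in> Ob C" using f by simp
  note D1 = Dv[OF Y p(1)] and D2 = Dv[OF Y q(1)]
  have "sm p (sm q f) = Rm a1 b1 (Rm a2 b2 f)" using sm_rep[OF f q] sm_rep[OF Rm_ar(1)[OF f q(1)] p] by simp
  also have "\<dots> = Dv b1 (cd f) \<cdot> zm a1 (Dv b2 (cd f) \<cdot> zm a2 f)" unfolding Rm_def using D2 f by simp
  also have "zm a1 (Dv b2 (cd f) \<cdot> zm a2 f) = Dv b2 (cd f) \<cdot> zm a1 (zm a2 f)" using zm_comp_l[of "zm a2 f" "Dv b2 (cd f)" a1] D2 f by simp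
  also have "Dv b1 (cd f) \<cdot> (Dv b2 (cd f) \<cdot> zm a1 (zm a2 f)) = (Dv b1 (cd f) \<cdot> Dv b2 (cd f)) \<cdot> zm a1 (zm a2 f)"
    using D1 D2 f by (subst comp_assoc) simp_all
  also have "\<dots> = Rm (a1 * a2) (b1 * b2) f" unfolding Rm_def using Dv_mult[OF Y p(1) q(1)] zm_mult[OF f, of a1 a2] by (simp add: mult.commute)
  also have "\<dots> = sm (p * q) f" using sm_rep[OF f b12 pq] by simp
  finally show ?thesis by simp
qed

lemma sm_addq: assumes f: "f \<in> Ar C" shows "sm (p + q) f = sm p f \<boxplus> sm q f"
proof -
  obtain a1 b1 where p: "1 \<le> b1" "p = of_int a1 / of_int b1" using sm_ex by blast
  obtain a2 b2 where q: "1 \<le> b2" "q = of_int a2 / of_int b2" using sm_ex by blast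
  have b12: "1 \<le> b1 * b2" using p q mult_mono[of 1 b1 1 b2] by simp
  have pq: "p + q = of_int (a1 * b2 + a2 * b1) / of_int (b1 * b2)" using p q by (simp add: field_simps)
  have Y: "cd f \<in> Ob C" using f by simp
  note D = Dv[OF Y b12]
  have "sm (p + q) f = Dv (b1 * b2) (cd f) \<cdot> zm (a1 * b2 + a2 * b1) f" using sm_rep[OF f b12 pq] unfolding Rm_def by simp
  also have "zm (a1 * b2 + a2 * b1) f = zm (a1 * b2) f \<boxplus> zm (a2 * b1) f" using zm_add[OF f] by simp
  also have "Dv (b1 * b2) (cd f) \<cdot> (zm (a1 * b2) f \<boxplus> zm (a2 * b1) f) = Rm (a1 * b2) (b1 * b2) f \<boxplus> Rm (a2 * b1) (b2 * b1) f"
    unfolding Rm_def using D f by (subst bil_l) (simp_all add: mult.commute)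
  also have "\<dots> = Rm a1 b1 f \<boxplus> Rm a2 b2 f" using Rm_scale[OF f p(1) q(1)] Rm_scale[OF f q(1) p(1)] by simp
  finally show ?thesis using sm_rep[OF f p] sm_rep[OF f q] by simp
qed

lemma sm_distr: assumes "par f g" shows "sm q (f \<boxplus> g) = sm q f \<boxplus> sm q g"
proof -
  obtain a b where q: "1 \<le> b" "q = of_int a / of_int b" using sm_ex by blast
  have Y: "cd f \<in> Ob C" using assms by simp
  note D = Dv[OF Y q(1)]
  have "sm q (f \<boxplus> g) = Dv b (cd f) \<cdot> (zm a f \<boxplus> zm a g)" using sm_rep[OF _ q, of "f \<boxplus> g"] assms zm_distr[OF assms] unfolding Rm_def by simp
  also have "\<dots> = Rm a b f \<boxplus> Rm a b g" unfolding Rm_def using D assms by (subst bil_l) simp_all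
  finally show ?thesis using sm_rep[OF _ q, of f] sm_rep[OF _ q, of g] assms by simp
qed

lemma sm_comp_l: assumes f: "f \<in> Ar C" and g: "g \<in> Ar C" "dm g = cd f" shows "g \<cdot> sm q f = sm q (g \<cdot> f)"
proof -
  obtain a b where q: "1 \<le> b" "q = of_int a / of_int b" using sm_ex by blast
  note D1 = Dv[of "cd f" b] and D2 = Dv[of "cd g" b]
  have "g \<cdot> sm q f = g \<cdot> (Dv b (cd f) \<cdot> zm a f)" using sm_rep[OF f q] unfolding Rm_def by simp
  also have "\<dots> = (g \<cdot> Dv b (cd f)) \<cdot> zm a f" using D1 f g q by (subst comp_assoc) simp_all
  also have "g \<cdot> Dv b (cd f) = Dv b (cd g) \<cdot> g" using Dv_nat[OF g(1) q(1)] g by simp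
  also have "(Dv b (cd g) \<cdot> g) \<cdot> zm a f = Dv b (cd g) \<cdot> zm a (g \<cdot> f)" using D2 f g q zm_comp_l[OF f g] by (subst comp_assoc) simp_all
  also have "\<dots> = sm q (g \<cdot> f)" using sm_rep[OF _ q, of "g \<cdot> f"] f g unfolding Rm_def by simp
  finally show ?thesis .
qed

lemma sm_comp_r: assumes f: "f \<in> Ar C" and g: "g \<in> Ar C" "dm g = cd f" shows "sm q g \<cdot> f = sm q (g \<cdot> f)"
proof -
  obtain a b where q: "1 \<le> b" "q = of_int a / of_int b" using sm_ex by blast
  note D2 = Dv[of "cd g" b]
  have "sm q g \<cdot> f = (Dv b (cd g) \<cdot> zm a g) \<cdot> f" using sm_rep[OF g(1) q] unfolding Rm_def by simp
  also have "\<dots> = Dv b (cd g) \<cdot> (zm a g \<cdot> f)" using D2 f g q by (subst comp_assoc) simp_all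
  also have "zm a g \<cdot> f = zm a (g \<cdot> f)" using zm_comp_r[OF f g] .
  also have "Dv b (cd g) \<cdot> zm a (g \<cdot> f) = sm q (g \<cdot> f)" using sm_rep[OF _ q, of "g \<cdot> f"] f g unfolding Rm_def by simp
  finally show ?thesis .
qed

lemma sm_st: assumes f: "f \<in> Ar C" shows "st (sm q f) = sm q (st f)"
proof -
  obtain a b where q: "1 \<le> b" "q = of_int a / of_int b" using sm_ex by blast
  note D1 = Dv[of "cd f" b] and D2 = Dv[of "dm f" b]
  have "st (sm q f) = st (Dv b (cd f) \<cdot> zm a f)" using sm_rep[OF f q] unfolding Rm_def by simp
  also have "\<dots> = st (zm a f) \<cdot> st (Dv b (cd f))" using D1 f q by (intro st_comp) simp_all
  also have "\<dots> = zm a (st f) \<cdot> Dv b (cd f)" using zm_st[OF f] Dv_st[of "cd f" b] f q by simp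
  also have "\<dots> = Dv b (dm f) \<cdot> zm a (st f)" using Dv_nat[of "zm a (st f)" b] f q by simp
  also have "\<dots> = sm q (st f)" using sm_rep[OF _ q, of "st f"] f unfolding Rm_def by simp
  finally show ?thesis .
qed

end


context menr begin

lemma ab_enr: "ab_enriched C add"
proof -
  have g: "ab_group_on (Hm C X Y) add" if XY: "X \<in> Ob C" "Y \<in> Ob C" for X Y
  proof -
    have "\<forall>x\<in>Hm C X Y. \<exists>y\<in>Hm C X Y. x \<boxplus> y = zr X Y"
    proof
      fix x assume "x \<in> Hm C X Y"
      then have x: "x \<in> Ar C" "dm x = X" "cd x = Y" by simp_all
      obtain g where "g \<in> Ar C" "dm g = dm x" "cd g = cd x" "x \<boxplus> g = zr (dm x) (cd x)" using neg_ex[OF x(1)] by blast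
      then show "\<exists>y\<in>Hm C X Y. x \<boxplus> y = zr X Y" using x by auto
    qed
    moreover have "zr X Y \<in> Hm C X Y" using XY by simp
    moreover have "\<forall>x\<in>Hm C X Y. zr X Y \<boxplus> x = x" by simp
    moreover have "\<forall>x\<in>Hm C X Y. \<forall>y\<in>Hm C X Y. x \<boxplus> y \<in> Hm C X Y" by simp
    moreover have "\<forall>x\<in>Hm C X Y. \<forall>y\<in>Hm C X Y. \<forall>z\<in>Hm C X Y. x \<boxplus> y \<boxplus> z = x \<boxplus> (y \<boxplus> z)"
      by (simp add: add_assoc)
    moreover have "\<forall>x\<in>Hm C X Y. \<forall>y\<in>Hm C X Y. x \<boxplus> y = y \<boxplus> x"
    proof (intro ballI)
      fix x y assume "x \<in> Hm C X Y" "y \<in> Hm C X Y"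
      then show "x \<boxplus> y = y \<boxplus> x" by (intro add_comm) simp
    qed
    ultimately show ?thesis unfolding ab_group_on_def by blast
  qed
  show ?thesis unfolding ab_enriched_def using g bil_l bil_r by simp
qed

lemma rat_lin: "rat_linear C add sm"
proof -
  have v: "rat_vector_space_on (Hm C X Y) add sm" if XY: "X \<in> Ob C" "Y \<in> Ob C" for X Y
  proof -
    have "ab_group_on (Hm C X Y) add" using ab_enr XY unfolding ab_enriched_def by blast
    then show ?thesis unfolding rat_vector_space_on_def using sm_ar sm_1 sm_mult sm_addq sm_distr by simp
  qed
  show ?thesis unfolding rat_linear_def using ab_enr v sm_comp_l sm_comp_r by simp
qed

end

lemma (in pc) ab_menr: assumes ab: "ab_enriched C add" shows "menr C add"
proof -
  have grp: "ab_group_on (Hm C X Y) add" if "X \<in> Ob C" "Y \<in> Ob C" for X Y using ab that unfolding ab_enriched_def by blast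
  have cl: "add f g \<in> Hm C X Y" if "f \<in> Hm C X Y" "g \<in> Hm C X Y" for f g X Y
    using grp[of X Y] that unfolding ab_group_on_def by (metis hom_iff dc_ob)
  define E where "E X Y = (SOME e. e \<in> Hm C X Y \<and> (\<forall>x\<in>Hm C X Y. add e x = x) \<and> (\<forall>x\<in>Hm C X Y. \<exists>y\<in>Hm C X Y. add x y = e))" for X Y
  have E: "E X Y \<in> Hm C X Y \<and> (\<forall>x\<in>Hm C X Y. add (E X Y) x = x) \<and> (\<forall>x\<in>Hm C X Y. \<exists>y\<in>Hm C X Y. add x y = E X Y)"
    if "X \<in> Ob C" "Y \<in> Ob C" for X Y
  proof -
    have "\<exists>e. e \<in> Hm C X Y \<and> (\<forall>x\<in>Hm C X Y. add e x = x) \<and> (\<forall>x\<in>Hm C X Y. \<exists>y\<in>Hm C X Y. add x y = e)"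
      using grp[OF that] unfolding ab_group_on_def by blast
    from someI_ex[OF this] show ?thesis unfolding E_def .
  qed
  have idem: "x = E X Y" if XY: "X \<in> Ob C" "Y \<in> Ob C" and x: "x \<in> Hm C X Y" "add x x = x" for X Y x
  proof -
    obtain y where y: "y \<in> Hm C X Y" "add x y = E X Y" using E[OF XY] x by blast
    have ax: "\<forall>a\<in>Hm C X Y. \<forall>b\<in>Hm C X Y. \<forall>c\<in>Hm C X Y. add (add a b) c = add a (add b c)"
      and cm: "\<forall>a\<in>Hm C X Y. \<forall>b\<in>Hm C X Y. add a b = add b a" using grp[OF XY] unfolding ab_group_on_def by blast+
    have "E X Y = add (add x x) y" using x y by simp
    also have "\<dots> = add x (add x y)" using ax x y by blast
    also have "\<dots> = add (E X Y) x" using y cm x E[OF XY] by metis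
    also have "\<dots> = x" using E[OF XY] x by blast
    finally show ?thesis by simp
  qed
  have bil: "cmp C g (add f f') = add (cmp C g f) (cmp C g f') \<and> cmp C (add g g') f = add (cmp C g f) (cmp C g' f)"
    if "f \<in> Hm C X Y" "f' \<in> Hm C X Y" "g \<in> Hm C Y Z" "g' \<in> Hm C Y Z" for f f' g g' X Y Z
  proof -
    have "X \<in> Ob C" "Y \<in> Ob C" "Z \<in> Ob C" using that by (metis hom_iff dc_ob)+
    then show ?thesis using ab that unfolding ab_enriched_def by blast
  qed
  have El: "g \<cdot> E X Y = E X Z" if "X \<in> Ob C" "g \<in> Hm C Y Z" for X Y Z g
  proof -
    have YZ: "Y \<in> Ob C" "Z \<in> Ob C" using that by (metis hom_iff dc_ob)+
    have e: "E X Y \<in> Hm C X Y" "add (E X Y) (E X Y) = E X Y" using E[OF that(1) YZ(1)] by blast+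
    have "add (g \<cdot> E X Y) (g \<cdot> E X Y) = g \<cdot> E X Y" using bil[OF e(1) e(1) that(2) that(2)] e by simp
    moreover have "g \<cdot> E X Y \<in> Hm C X Z" using e that by simp
    ultimately show ?thesis using idem[OF that(1) YZ(2)] by simp
  qed
  have Er: "E Y Z \<cdot> f = E X Z" if "Z \<in> Ob C" "f \<in> Hm C X Y" for X Y Z f
  proof -
    have XY: "X \<in> Ob C" "Y \<in> Ob C" using that by (metis hom_iff dc_ob)+
    have e: "E Y Z \<in> Hm C Y Z" "add (E Y Z) (E Y Z) = E Y Z" using E[OF XY(2) that(1)] by blast+
    have "add (E Y Z \<cdot> f) (E Y Z \<cdot> f) = E Y Z \<cdot> f" using bil[OF that(2) that(2) e(1) e(1)] e by simp
    moreover have "E Y Z \<cdot> f \<in> Hm C X Z" using e that by simp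
    ultimately show ?thesis using idem[OF XY(1) that(1)] by simp
  qed
  have Ez: "zr X Y = E X Y" if XY: "X \<in> Ob C" "Y \<in> Ob C" for X Y
  proof -
    obtain Z a b where Z: "zero_object C Z" and a: "a \<in> Hm C X Z" and b: "b \<in> Hm C Z Y" and z: "zr X Y = b \<cdot> a"
      using zr_prop[OF XY] unfolding zero_mor_def by blast
    have ZO: "Z \<in> Ob C" using Z unfolding zero_object_def by blast
    have "\<exists>!f. f \<in> Hm C Z Z" using Z ZO unfolding zero_object_def by blast
    moreover have "E Z Z \<in> Hm C Z Z" using E[OF ZO ZO] by blast
    moreover have "ID Z \<in> Hm C Z Z" using ZO by simp
    ultimately have eZ: "E Z Z = ID Z" by blast
    have a': "a \<in> Ar C" "dm a = X" "cd a = Z" and b': "b \<in> Ar C" "dm b = Z" "cd b = Y" using a b by simp_all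
    have "zr X Y = b \<cdot> (E Z Z \<cdot> a)" using z eZ a' by simp
    also have "E Z Z \<cdot> a = E X Z" using Er[OF ZO a] .
    also have "b \<cdot> E X Z = E X Y" using El[OF XY(1) b] .
    finally show ?thesis .
  qed
  show ?thesis unfolding menr_def menr_axioms_def
  proof (intro conjI allI impI pc_axioms)
    fix f g assume "par f g"
    then have "add f g \<in> Hm C (dm f) (cd f)" using cl[of f "dm f" "cd f" g] by simp
    then show "add f g \<in> Ar C" "dm (add f g) = dm f" "cd (add f g) = cd f" by simp_all
  next
    fix f g h assume p: "par f g" "par f h"
    then have XY: "dm f \<in> Ob C" "cd f \<in> Ob C" by simp_all
    have m: "f \<in> Hm C (dm f) (cd f)" "g \<in> Hm C (dm f) (cd f)" "h \<in> Hm C (dm f) (cd f)" using p by simp_all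
    show "add (add f g) h = add f (add g h)" using grp[OF XY] m unfolding ab_group_on_def by blast
  next
    fix f g assume p: "par f g"
    then have XY: "dm f \<in> Ob C" "cd f \<in> Ob C" by simp_all
    have m: "f \<in> Hm C (dm f) (cd f)" "g \<in> Hm C (dm f) (cd f)" using p by simp_all
    show "add f g = add g f" using grp[OF XY] m unfolding ab_group_on_def by blast
  next
    fix f assume f: "f \<in> Ar C"
    then have XY: "dm f \<in> Ob C" "cd f \<in> Ob C" by simp_all
    show "add (zr (dm f) (cd f)) f = f" using Ez[OF XY] E[OF XY] f by simp
  next
    fix f f' g assume p: "par f f'" "g \<in> Ar C" "dm g = cd f"
    show "g \<cdot> add f f' = add (g \<cdot> f) (g \<cdot> f')" using bil[of f "dm f" "cd f" f' g "cd g" g] p by simp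
  next
    fix g g' f assume p: "par g g'" "f \<in> Ar C" "dm g = cd f"
    show "add g g' \<cdot> f = add (g \<cdot> f) (g' \<cdot> f)" using bil[of f "dm f" "cd f" f g "cd g" g'] p by simp
  qed
qed


lemma rvs_int:
  assumes v: "rat_vector_space_on H add s" and G: "comm_group G" and cG: "carrier G = H" and mG: "mult G = add"
    and y: "y \<in> H"
  shows "s (of_int k) y = y [^]\<^bsub>G\<^esub> k"
proof -
  interpret G: comm_group G by fact
  have cl: "\<And>q z. z \<in> H \<Longrightarrow> s q z \<in> H" and one: "\<And>z. z \<in> H \<Longrightarrow> s 1 z = z"
    and dist: "\<And>a b z. z \<in> H \<Longrightarrow> s (a + b) z = add (s a z) (s b z)"
    using v unfolding rat_vector_space_on_def by blast+
  have yc: "y \<in> carrier G" using y cG by simp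
  have s0: "s 0 y = \<one>\<^bsub>G\<^esub>"
  proof -
    have "s 0 y = s 0 y \<otimes>\<^bsub>G\<^esub> s 0 y" using dist[OF y, of 0 0] mG by simp
    then show ?thesis using G.l_cancel_one[of "s 0 y" "s 0 y"] cl[OF y] cG by simp
  qed
  have nat: "s (of_nat n) y = y [^]\<^bsub>G\<^esub> n" for n
  proof (induct n)
    case 0 then show ?case using s0 by simp
  next
    case (Suc n)
    have "s (of_nat (Suc n)) y = s (of_nat n) y \<otimes>\<^bsub>G\<^esub> s 1 y" using dist[OF y, of "of_nat n" 1] mG by (simp add: add.commute)
    then show ?case using Suc one[OF y] by simp
  qed
  show ?thesis
  proof (cases "k \<ge> 0")
    case True
    then obtain n where "k = int n" by (metis nonneg_eq_int)
    then show ?thesis using nat[of n] by (metis int_pow_int of_int_of_nat_eq)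
  next
    case False
    then obtain n where kn: "k = - int n" by (metis neg_int_cases le_less not_le)
    have "s (of_int k) y \<otimes>\<^bsub>G\<^esub> s (of_nat n) y = s 0 y" using dist[OF y, of "of_int k" "of_nat n"] kn mG by simp
    then have eq: "s (of_int k) y \<otimes>\<^bsub>G\<^esub> y [^]\<^bsub>G\<^esub> n = \<one>\<^bsub>G\<^esub>" using s0 nat by simp
    have "inv\<^bsub>G\<^esub> (y [^]\<^bsub>G\<^esub> n) = s (of_int k) y"
      using G.inv_equality[OF eq] G.nat_pow_closed[OF yc, of n] cl[OF y] cG by simp
    then show ?thesis using kn G.int_pow_neg_int[OF yc, of n] by simp
  qed
qed

lemma rvs_unique:
  assumes v1: "rat_vector_space_on H add s1" and v2: "rat_vector_space_on H add s2" and x: "x \<in> H"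
  shows "s1 q x = s2 q x"
proof -
  have ag: "ab_group_on H add" using v1 unfolding rat_vector_space_on_def by blast
  obtain e where e: "e \<in> H" "\<forall>x\<in>H. add e x = x" "\<forall>x\<in>H. \<exists>y\<in>H. add x y = e" using ag unfolding ab_group_on_def by blast
  define G where "G = \<lparr>carrier = H, mult = add, one = e\<rparr>"
  have G: "comm_group G" unfolding G_def
  proof (rule comm_groupI, simp_all)
    show "\<And>x y. x \<in> H \<Longrightarrow> y \<in> H \<Longrightarrow> add x y \<in> H" using ag unfolding ab_group_on_def by blast
    show "e \<in> H" by fact
    show "\<And>x y z. x \<in> H \<Longrightarrow> y \<in> H \<Longrightarrow> z \<in> H \<Longrightarrow> add (add x y) z = add x (add y z)" using ag unfolding ab_group_on_def by blast
    show "\<And>x y. x \<in> H \<Longrightarrow> y \<in> H \<Longrightarrow> add x y = add y x" using ag unfolding ab_group_on_def by blast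
    show "\<And>x. x \<in> H \<Longrightarrow> add e x = x" using e by blast
    show "\<And>x. x \<in> H \<Longrightarrow> \<exists>y\<in>H. add y x = e" using e ag unfolding ab_group_on_def by metis
  qed
  have cG: "carrier G = H" and mG: "mult G = add" unfolding G_def by simp_all
  note i1 = rvs_int[OF v1 G cG mG] and i2 = rvs_int[OF v2 G cG mG]
  have cl1: "\<And>q z. z \<in> H \<Longrightarrow> s1 q z \<in> H" using v1 unfolding rat_vector_space_on_def by blast
  have cl2: "\<And>q z. z \<in> H \<Longrightarrow> s2 q z \<in> H" using v2 unfolding rat_vector_space_on_def by blast
  have m1: "\<And>a b z. z \<in> H \<Longrightarrow> s1 (a * b) z = s1 a (s1 b z)" using v1 unfolding rat_vector_space_on_def by blast
  have m2: "\<And>a b z. z \<in> H \<Longrightarrow> s2 (a * b) z = s2 a (s2 b z)" using v2 unfolding rat_vector_space_on_def by blast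
  have o1: "\<And>z. z \<in> H \<Longrightarrow> s1 1 z = z" using v1 unfolding rat_vector_space_on_def by blast
  have o2: "\<And>z. z \<in> H \<Longrightarrow> s2 1 z = z" using v2 unfolding rat_vector_space_on_def by blast
  obtain a b where qo: "quotient_of q = (a, b)" by (cases "quotient_of q") auto
  have b: "b > 0" using quotient_of_denom_pos[OF qo] .
  have q: "q = of_int a * (1 / of_int b)" using quotient_of_div[OF qo] by simp
  have bb: "(of_int b :: rat) * (1 / of_int b) = 1" "(1 / of_int b :: rat) * of_int b = 1" using b by simp_all
  define y1 where "y1 = s1 (1 / of_int b) x"
  define y2 where "y2 = s2 (1 / of_int b) x"
  have y: "y1 \<in> H" "y2 \<in> H" unfolding y1_def y2_def using cl1 cl2 x by simp_all
  have p1: "y1 [^]\<^bsub>G\<^esub> b = x" using i1[OF y(1), of b] m1[OF x, of "of_int b" "1 / of_int b"] bb o1[OF x] y1_def by simp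
  have p2: "y2 [^]\<^bsub>G\<^esub> b = x" using i2[OF y(2), of b] m2[OF x, of "of_int b" "1 / of_int b"] bb o2[OF x] y2_def by simp
  have "y1 = s1 (1 / of_int b) (s1 (of_int b) y1)" using m1[OF y(1), of "1 / of_int b" "of_int b"] bb o1[OF y(1)] by simp
  also have "s1 (of_int b) y1 = s1 (of_int b) y2" using i1[OF y(1)] i1[OF y(2)] p1 p2 by simp
  also have "s1 (1 / of_int b) (s1 (of_int b) y2) = y2" using m1[OF y(2), of "1 / of_int b" "of_int b"] bb o1[OF y(2)] by simp
  finally have yy: "y1 = y2" .
  have "s1 q x = s1 (of_int a * (1 / of_int b)) x" using q by simp
  also have "\<dots> = s1 (of_int a) y1" unfolding y1_def by (rule m1[OF x])
  also have "\<dots> = y1 [^]\<^bsub>G\<^esub> a" using i1[OF y(1)] .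
  also have "\<dots> = s2 (of_int a) y2" using i2[OF y(2)] yy by simp
  also have "\<dots> = s2 (of_int a * (1 / of_int b)) x" unfolding y2_def by (rule m2[OF x, symmetric])
  also have "\<dots> = s2 q x" using q by simp
  finally show ?thesis .
qed

theorem corollary6p7:
  fixes C :: "('o, 'm) star_cat"
  assumes "pre_hilbert C"
  shows "(\<exists>add. ab_enriched C add) \<and>
         (\<forall>add. ab_enriched C add \<longrightarrow>
            (\<exists>smul. rat_linear C add smul \<and>
                    (\<forall>f \<in> Ar C. \<forall>q. star C (smul q f) = smul q (star C f))) \<and>
            (\<forall>smul1 smul2. rat_linear C add smul1 \<longrightarrow> rat_linear C add smul2 \<longrightarrow>
                    (\<forall>f \<in> Ar C. \<forall>q. smul1 q f = smul2 q f)))"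
proof -
  interpret pc C using assms by (simp add: pc_def)
  have 1: "\<exists>add. ab_enriched C add" using menr.ab_enr[OF menr_op1] by blast
  have 2: "(\<exists>smul. rat_linear C add smul \<and>
                    (\<forall>f \<in> Ar C. \<forall>q. star C (smul q f) = smul q (star C f))) \<and>
            (\<forall>smul1 smul2. rat_linear C add smul1 \<longrightarrow> rat_linear C add smul2 \<longrightarrow>
                    (\<forall>f \<in> Ar C. \<forall>q. smul1 q f = smul2 q f))" if ab: "ab_enriched C add" for add
  proof
    interpret m: menr C add using ab_menr[OF ab] .
    show "\<exists>smul. rat_linear C add smul \<and> (\<forall>f \<in> Ar C. \<forall>q. star C (smul q f) = smul q (star C f))"
      using m.rat_lin m.sm_st by blast
    show "\<forall>smul1 smul2. rat_linear C add smul1 \<longrightarrow> rat_linear C add smul2 \<longrightarrow>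
                    (\<forall>f \<in> Ar C. \<forall>q. smul1 q f = smul2 q f)"
    proof (intro allI impI ballI)
      fix smul1 smul2 f q assume r: "rat_linear C add smul1" "rat_linear C add smul2" and f: "f \<in> Ar C"
      have XY: "dm f \<in> Ob C" "cd f \<in> Ob C" using f by simp_all
      have v: "rat_vector_space_on (Hm C (dm f) (cd f)) add smul1" "rat_vector_space_on (Hm C (dm f) (cd f)) add smul2"
        using r XY unfolding rat_linear_def by blast+
      show "smul1 q f = smul2 q f" using rvs_unique[OF v] f by simp
    qed
  qed
  show ?thesis using 1 2 by blast
qed

end
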